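(* Consider the Gaussian broadcast model on $P=\mathcal{HS}_3$ with $\alpha_3=1/3$. Let $M,t$ be integers with $M\ge2^5$ and $t\ge2^{24}M^6$. Then for all integers $i,j,i',j'$ with $\max\{|i-i'|,|j-j'|\}\le2M$, $$\log t\ge\operatorname{Var}\big(X_{(i,j,t-i-j)}\big)\ge\operatorname{Cov}\big(X_{(i,j,t-i-j)},X_{(i',j',t-i'-j')}\big)\ge\frac{\log t}{400}.$$
   Context: Infinite model: $\mathcal{HS}_{d+1}=\{(x_1,\dots,x_{d+1})\in\mathbb Z^{d+1}:x_1+\dots+x_{d+1}\ge0\}$ with $u\le v$ iff $v-u\in\mathbb Z_{\ge0}^{d+1}$; layer $L_t$ = points with coordinate sum $t$; each point $v$ of rank $\ge1$ covers exactly the $d+1$ points $v-e_i$ (the set $\mathfrak p(v)$). Gaussian broadcast model: $X_0\sim\mathcal N(0,1)$; independently, i.i.d. $W_{u\to v}\sim\mathcal N(0,1)$ for covering pairs $u\lessdot v$; $X_v=X_0$ for every $v\in L_0$; and $X_v=\alpha_{d+1}\sum_{u\in\mathfrak p(v)}(X_u+W_{u\to v})$ for $v$ of rank $\ge1$. Here $d=2$; $\log$ is the natural logarithm. *)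

theory Defs
  imports "HOL-Probability.Probability"
begin

type_synonym point = "int \<times> int \<times> int"

definition rank :: "point \<Rightarrow> int" where
  "rank v = (case v of (a, b, c) \<Rightarrow> a + b + c)"

definition HS3 :: "point set" where
  "HS3 = {v. rank v \<ge> 0}"

definition pred_pt :: "nat \<Rightarrow> point \<Rightarrow> point" where
  "pred_pt i v = (case v of (a, b, c) \<Rightarrow>
     if i = 0 then (a - 1, b, c) else if i = 1 then (a, b - 1, c) else (a, b, c - 1))"

definition cover_edges :: "(point \<times> point) set" where
  "cover_edges = {(u, v). v \<in> HS3 \<and> rank v \<ge> 1 \<and> (\<exists>i<3. u = pred_pt i v)}"

text \<open>Recursive definition of the broadcast values: given the root value x0 and
  edge noises w, bx x0 w n v is the value at a point v of rank n.\<close>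
fun bx :: "real \<Rightarrow> real \<Rightarrow> (point \<times> point \<Rightarrow> real) \<Rightarrow> nat \<Rightarrow> point \<Rightarrow> real" where
  "bx \<alpha> x0 w 0 v = x0"
| "bx \<alpha> x0 w (Suc n) v =
     \<alpha> * (\<Sum>i<3. bx \<alpha> x0 w n (pred_pt i v) + w (pred_pt i v, v))"

definition broadcastX ::
  "real \<Rightarrow> ('w \<Rightarrow> real) \<Rightarrow> (point \<times> point \<Rightarrow> 'w \<Rightarrow> real) \<Rightarrow> point \<Rightarrow> 'w \<Rightarrow> real" where
  "broadcastX \<alpha> X0 W v = (\<lambda>\<omega>. bx \<alpha> (X0 \<omega>) (\<lambda>e. W e \<omega>) (nat (rank v)) v)"

definition covariance :: "'w measure \<Rightarrow> ('w \<Rightarrow> real) \<Rightarrow> ('w \<Rightarrow> real) \<Rightarrow> real" where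
  "covariance M X Y =
     (\<integral>\<omega>. (X \<omega> - (\<integral>x. X x \<partial>M)) * (Y \<omega> - (\<integral>x. Y x \<partial>M)) \<partial>M)"

definition variance_of :: "'w measure \<Rightarrow> ('w \<Rightarrow> real) \<Rightarrow> real" where
  "variance_of M X = (\<integral>\<omega>. (X \<omega> - (\<integral>x. X x \<partial>M))\<^sup>2 \<partial>M)"

definition noise_family ::
  "('w \<Rightarrow> real) \<Rightarrow> (point \<times> point \<Rightarrow> 'w \<Rightarrow> real) \<Rightarrow> (point \<times> point) option \<Rightarrow> 'w \<Rightarrow> real" where
  "noise_family X0 W k = (case k of None \<Rightarrow> X0 | Some e \<Rightarrow> W e)"

definition gaussian_broadcast_model ::
  "'w measure \<Rightarrow> ('w \<Rightarrow> real) \<Rightarrow> (point \<times> point \<Rightarrow> 'w \<Rightarrow> real) \<Rightarrow> bool" where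
  "gaussian_broadcast_model M X0 W \<longleftrightarrow>
     prob_space M \<and>
     distributed M lborel X0 std_normal_density \<and>
     (\<forall>e\<in>cover_edges. distributed M lborel (W e) std_normal_density) \<and>
     prob_space.indep_vars M (\<lambda>_. borel) (noise_family X0 W) (insert None (Some ` cover_edges))"

end

theory Submission
  imports Defs "HOL-Library.Groups_Big_Fun" "HOL-Analysis.L2_Norm"
begin


definition ev :: "nat \<Rightarrow> point" where
  "ev i = (if i = 0 then (1,0,0) else if i = 1 then (0,1,0) else (0,0,1))"

lemma pred_pt_ev: "pred_pt i v = v - ev i"
  by (cases v) (auto simp: pred_pt_def ev_def)

lemma rank_minus_ev: "i < 3 \<Longrightarrow> rank (v - ev i) = rank v - 1"
  by (cases v) (auto simp: rank_def ev_def)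

definition tri :: "nat \<Rightarrow> point \<Rightarrow> real" where
  "tri m v = (case v of (a, b, c) \<Rightarrow>
     if 0 \<le> a \<and> 0 \<le> b \<and> 0 \<le> c \<and> a + b + c = int m
     then fact m / (fact (nat a) * fact (nat b) * fact (nat c) * 3 ^ m) else 0)"

lemma tri_nonneg: "0 \<le> tri m v"
  by (cases v) (auto simp: tri_def)

lemma fact_int_pred: "1 \<le> a \<Longrightarrow> (fact (nat a) :: real) = real_of_int a * fact (nat (a - 1))"
proof -
  assume "1 \<le> a"
  then have "nat a = Suc (nat (a - 1))" by simp
  then show ?thesis using \<open>1 \<le> a\<close> by (simp add: of_nat_nat)
qed

lemma tri_rec: "tri (Suc m) v = (1/3) * (\<Sum>i<3. tri m (v - ev i))"
proof (cases v)
  case (fields a b c)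
  have s3: "(\<Sum>i<3. f i) = f 0 + f 1 + (f 2::real)" for f :: "nat \<Rightarrow> real"
    by (simp add: eval_nat_numeral)
  show ?thesis
  proof (cases "0 \<le> a \<and> 0 \<le> b \<and> 0 \<le> c \<and> a + b + c = int (Suc m)")
    case True
    let ?D = "fact (nat a) * fact (nat b) * fact (nat c) * (3::real) ^ m"
    have Dpos: "?D > 0" by simp
    have t1: "tri m (a - 1, b, c) = real_of_int a * fact m / ?D"
    proof (cases "a = 0")
      case True then show ?thesis by (simp add: tri_def)
    next
      case False
      then have "1 \<le> a" using \<open>0\<le>a \<and> _\<close> by linarith
      then show ?thesis using True by (simp add: tri_def fact_int_pred[of a] field_simps)
    qed
    have t2: "tri m (a, b - 1, c) = real_of_int b * fact m / ?D"
    proof (cases "b = 0")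
      case True then show ?thesis by (simp add: tri_def)
    next
      case False
      then have "1 \<le> b" using \<open>0\<le>a \<and> _\<close> by linarith
      then show ?thesis using True by (simp add: tri_def fact_int_pred[of b] field_simps)
    qed
    have t3: "tri m (a, b, c - 1) = real_of_int c * fact m / ?D"
    proof (cases "c = 0")
      case True then show ?thesis by (simp add: tri_def)
    next
      case False
      then have "1 \<le> c" using \<open>0\<le>a \<and> _\<close> by linarith
      then show ?thesis using True by (simp add: tri_def fact_int_pred[of c] field_simps)
    qed
    have abc: "real_of_int a + real_of_int b + real_of_int c = real (Suc m)"
      using True by (metis of_int_add of_int_of_nat_eq)
    have "tri (Suc m) v = fact (Suc m) / (3 * ?D)"
      using True fields by (simp add: tri_def field_simps)
    also have "\<dots> = (1/3) * ((real_of_int a + real_of_int b + real_of_int c) * fact m / ?D)"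
      using abc by (simp add: field_simps)
    finally show ?thesis using fields t1 t2 t3
      by (simp add: s3 ev_def add_divide_distrib distrib_right)
  next
    case False
    have "tri m (v - ev i) = 0" for i
      using False fields by (auto simp: tri_def ev_def)
    then show ?thesis using False fields by (simp add: tri_def)
  qed
qed


definition box :: "nat \<Rightarrow> point set" where
  "box m = {0..int m} \<times> {0..int m} \<times> {0..int m}"

lemma finite_box[simp]: "finite (box m)"
  by (simp add: box_def)

lemma tri_supp: "tri m y \<noteq> 0 \<Longrightarrow> y \<in> box m"
  by (cases y) (auto simp: tri_def box_def split: if_splits)

lemma SA_shift: "Sum_any (\<lambda>y. f (y + d)) = Sum_any (f :: point \<Rightarrow> real)"
proof (rule Sum_any.reindex_cong[symmetric])
  show "bij (\<lambda>y::point. y + d)"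
    by (rule bijI) (auto simp: inj_def intro: surjI[of _ "\<lambda>y. y - d"])
qed (simp add: comp_def)

lemma SA_superset: "finite A \<Longrightarrow> (\<And>y. g y \<noteq> 0 \<Longrightarrow> y \<in> A) \<Longrightarrow> Sum_any g = (\<Sum>y\<in>A. (g y :: real))"
  by (rule Sum_any.expand_superset) auto

definition E :: "nat \<Rightarrow> (point \<Rightarrow> real) \<Rightarrow> real" where
  "E m f = (\<Sum>y\<in>box m. tri m y * f y)"

lemma E_SA: "E m f = Sum_any (\<lambda>y. tri m y * f y)"
  unfolding E_def by (rule SA_superset[symmetric]) (auto intro: tri_supp)

lemma less3: "i < (3::nat) \<Longrightarrow> i = 0 \<or> i = 1 \<or> i = 2" by auto

lemma box_mono: "y - ev i \<in> box m \<Longrightarrow> i < 3 \<Longrightarrow> y \<in> box (Suc m)"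
  by (cases y) (auto simp: box_def ev_def dest!: less3)

lemma E_rec: "E (Suc m) f = (1/3) * (\<Sum>i<3. E m (\<lambda>y. f (y + ev i)))"
proof -
  have "E (Suc m) f = (\<Sum>y\<in>box (Suc m). (1/3) * (\<Sum>i<3. tri m (y - ev i) * f y))"
    unfolding E_def by (simp add: tri_rec sum_distrib_right)
  also have "\<dots> = (1/3) * (\<Sum>i<3. \<Sum>y\<in>box (Suc m). tri m (y - ev i) * f y)"
    by (simp add: sum_distrib_left sum.swap[of _ "box (Suc m)"])
  also have "\<dots> = (1/3) * (\<Sum>i<3. E m (\<lambda>y. f (y + ev i)))"
  proof -
    have "(\<Sum>y\<in>box (Suc m). tri m (y - ev i) * f y) = E m (\<lambda>y. f (y + ev i))" if "i < 3" for i
    proof -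
      have "(\<Sum>y\<in>box (Suc m). tri m (y - ev i) * f y) = Sum_any (\<lambda>y. tri m (y - ev i) * f y)"
        by (rule SA_superset[symmetric]) (auto intro: box_mono[OF tri_supp] that)
      also have "\<dots> = Sum_any (\<lambda>y. tri m ((y + ev i) - ev i) * f (y + ev i))"
        by (rule SA_shift[symmetric, where f = "\<lambda>y. tri m (y - ev i) * f y"])
      also have "\<dots> = E m (\<lambda>y. f (y + ev i))" by (simp add: E_SA)
      finally show ?thesis .
    qed
    then show ?thesis by simp
  qed
  finally show ?thesis .
qed

lemma E_lin: "E m (\<lambda>y. c * f y) = c * E m f"
  unfolding E_def by (simp add: sum_distrib_left mult_ac)

lemma E_sum: "E m (\<lambda>y. \<Sum>k\<in>K. g k y) = (\<Sum>k\<in>K. E m (g k))"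
  unfolding E_def by (simp add: sum_distrib_left sum.swap[of _ K])

lemma E_add: "E m (\<lambda>y. f y + g y) = E m f + E m g"
  unfolding E_def by (simp add: distrib_left sum.distrib)

lemma E_const: "E m (\<lambda>y. 1) = 1"
proof (induction m)
  case 0
  have "box 0 = {(0,0,0)}" by (auto simp: box_def)
  then show ?case by (simp add: E_def tri_def)
next
  case (Suc m)
  then show ?case by (simp add: E_rec)
qed

definition R :: "nat \<Rightarrow> point \<Rightarrow> real" where
  "R m d = E m (\<lambda>y. tri m (y - d))"

lemma R_rec: "R (Suc m) d = (1/9) * (\<Sum>i<3. \<Sum>k<3. R m (d - ev i + ev k))"
proof -
  have "R (Suc m) d = (1/3) * (\<Sum>i<3. E m (\<lambda>y. (1/3) * (\<Sum>k<3. tri m (y + ev i - d - ev k))))"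
    unfolding R_def by (simp add: E_rec tri_rec)
  also have "\<dots> = (1/9) * (\<Sum>i<3. \<Sum>k<3. R m (d - ev i + ev k))"
    unfolding E_lin E_sum R_def by (simp add: sum_distrib_left algebra_simps)
  finally show ?thesis .
qed

lemma R0: "R 0 d = (if d = 0 then 1 else 0)"
proof -
  have "box 0 = {(0,0,0)}" by (auto simp: box_def)
  then show ?thesis by (cases d) (auto simp: R_def E_def tri_def zero_prod_def)
qed

lemma R_nonneg: "0 \<le> R m d"
  unfolding R_def E_def by (intro sum_nonneg mult_nonneg_nonneg tri_nonneg)

definition G :: "nat \<Rightarrow> point \<Rightarrow> real" where
  "G n d = 1 + (1/3) * (\<Sum>j<n. R j d)"

lemma G0: "G 0 d = 1" by (simp add: G_def)

lemma G_rec: "G (Suc n) d = (1/9) * (\<Sum>i<3. \<Sum>k<3. G n (d - ev i + ev k)) + (if d = 0 then 1/3 else 0)"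
proof -
  have s9: "(\<Sum>i<(3::nat). \<Sum>k<(3::nat). (c::real)) = 9 * c" for c by simp
  have "G (Suc n) d = 1 + (1/3) * R 0 d + (1/3) * (\<Sum>j<n. R (Suc j) d)"
    unfolding G_def sum.lessThan_Suc_shift by (simp add: algebra_simps)
  also have "\<dots> = (1/9) * (\<Sum>i<3. \<Sum>k<3. G n (d - ev i + ev k)) + (if d = 0 then 1/3 else 0)"
    unfolding G_def R_rec R0
    by (simp add: sum.distrib sum_distrib_left sum.swap[of _ "{..<n}"] algebra_simps s9)
  finally show ?thesis .
qed


definition nu :: "nat \<Rightarrow> point \<Rightarrow> real" where
  "nu m d = sqrt (Sum_any (\<lambda>y. (tri m y - tri m (y - d))\<^sup>2))"

lemma tri_shift_supp: "tri m (y - d) \<noteq> 0 \<Longrightarrow> y \<in> (\<lambda>z. z + d) ` box m"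
  by (rule image_eqI[of _ _ "y - d"]) (auto intro: tri_supp)

lemma supp_diff: "tri m y - tri m (y - d) \<noteq> 0 \<Longrightarrow> y \<in> box m \<union> (\<lambda>z. z + d) ` box m"
  using tri_supp[of m y] tri_shift_supp[of m y d] by (cases "tri m y = 0") simp_all

lemma supp_diff2: "tri m (y - d1) - tri m (y - d1 - d2) \<noteq> 0 \<Longrightarrow> y \<in> (\<lambda>z. z + d1) ` box m \<union> (\<lambda>z. z + (d1 + d2)) ` box m"
  using tri_shift_supp[of m y d1] tri_shift_supp[of m y "d1 + d2"]
  by (cases "tri m (y - d1) = 0") (auto simp: diff_diff_eq)

lemma SA_E: "Sum_any (\<lambda>y. tri m y * f y) = E m f"
  by (simp add: E_SA)

lemma SA_tri_sq_shift: "Sum_any (\<lambda>y. (tri m (y - d))\<^sup>2) = R m 0"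
proof -
  have "Sum_any (\<lambda>y. (tri m (y - d))\<^sup>2) = Sum_any (\<lambda>y. (tri m y)\<^sup>2)"
    using SA_shift[of "\<lambda>y. (tri m y)\<^sup>2" "-d"] by simp
  also have "\<dots> = R m 0" unfolding R_def SA_E[symmetric] by (simp add: power2_eq_square)
  finally show ?thesis .
qed

lemma SA_sq_nonneg: "0 \<le> Sum_any (\<lambda>y. (f y :: real)\<^sup>2)"
  unfolding Sum_any.expand_set by (intro sum_nonneg) simp

lemma nu_sq: "(nu m d)\<^sup>2 = 2 * R m 0 - 2 * R m d"
proof -
  let ?F = "box m \<union> (\<lambda>z. z + d) ` box m"
  have fin: "finite ?F" by simp
  have "Sum_any (\<lambda>y. (tri m y - tri m (y - d))\<^sup>2) = (\<Sum>y\<in>?F. (tri m y - tri m (y - d))\<^sup>2)"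
    by (rule SA_superset[OF fin]) (use supp_diff[of m _ d] in simp)
  also have "\<dots> = (\<Sum>y\<in>?F. (tri m y)\<^sup>2) - 2 * (\<Sum>y\<in>?F. tri m y * tri m (y - d)) + (\<Sum>y\<in>?F. (tri m (y - d))\<^sup>2)"
    by (simp add: power2_diff sum.distrib sum_subtractf sum_distrib_left mult_ac)
  also have "(\<Sum>y\<in>?F. (tri m y)\<^sup>2) = R m 0"
    unfolding SA_tri_sq_shift[of m 0, symmetric] diff_zero by (rule SA_superset[OF fin, symmetric]) (auto dest: tri_supp)
  also have "(\<Sum>y\<in>?F. tri m y * tri m (y - d)) = R m d"
    unfolding R_def SA_E[symmetric] by (rule SA_superset[OF fin, symmetric]) (auto dest: tri_supp)
  also have "(\<Sum>y\<in>?F. (tri m (y - d))\<^sup>2) = R m 0"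
    unfolding SA_tri_sq_shift[of m d, symmetric] by (rule SA_superset[OF fin, symmetric]) (auto dest: tri_shift_supp)
  finally show ?thesis unfolding nu_def using SA_sq_nonneg[of "\<lambda>y. tri m y - tri m (y - d)"] by simp
qed

lemma R_le_R0: "R m d \<le> R m 0"
proof -
  have "0 \<le> (nu m d)\<^sup>2" by simp
  then show ?thesis unfolding nu_sq by simp
qed

lemma nu_L2: "finite F \<Longrightarrow> (\<And>y. tri m y - tri m (y - d) \<noteq> 0 \<Longrightarrow> y \<in> F) \<Longrightarrow>
   nu m d = L2_set (\<lambda>y. tri m y - tri m (y - d)) F"
  unfolding nu_def L2_set_def by (subst SA_superset[of F]) auto

lemma nu_triangle: "nu m (d1 + d2) \<le> nu m d1 + nu m d2"
proof -
  let ?F = "box m \<union> (\<lambda>z. z + d1) ` box m \<union> (\<lambda>z. z + (d1 + d2)) ` box m"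
  have fin: "finite ?F" by simp
  have supp: "tri m (y - d) \<noteq> 0 \<Longrightarrow> y \<in> (\<lambda>z. z + d) ` box m" for y d by (rule tri_shift_supp)
  have e1: "nu m (d1 + d2) = L2_set (\<lambda>y. tri m y - tri m (y - (d1 + d2))) ?F"
    by (rule nu_L2[OF fin]) (use supp_diff[of m _ "d1+d2"] in blast)
  have e2: "nu m d1 = L2_set (\<lambda>y. tri m y - tri m (y - d1)) ?F"
    by (rule nu_L2[OF fin]) (use supp_diff[of m _ "d1"] in blast)
  have "nu m d2 = sqrt (Sum_any (\<lambda>y. (tri m (y - d1) - tri m (y - d1 - d2))\<^sup>2))"
    unfolding nu_def using SA_shift[of "\<lambda>y. (tri m y - tri m (y - d2))\<^sup>2" "-d1"] by (simp add: algebra_simps)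
  also have "\<dots> = L2_set (\<lambda>y. tri m (y - d1) - tri m (y - d1 - d2)) ?F"
    unfolding L2_set_def
    by (subst SA_superset[OF fin]) (use supp_diff2[of m _ d1 d2] in auto)
  finally have e3: "nu m d2 = L2_set (\<lambda>y. tri m (y - d1) - tri m (y - d1 - d2)) ?F" .
  have "L2_set (\<lambda>y. tri m y - tri m (y - (d1 + d2))) ?F
        = L2_set (\<lambda>y. (tri m y - tri m (y - d1)) + (tri m (y - d1) - tri m (y - d1 - d2))) ?F"
    by (simp add: algebra_simps)
  also have "\<dots> \<le> L2_set (\<lambda>y. tri m y - tri m (y - d1)) ?F + L2_set (\<lambda>y. tri m (y - d1) - tri m (y - d1 - d2)) ?F"
    by (rule L2_set_triangle_ineq)
  finally show ?thesis using e1 e2 e3 by simp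
qed

lemma nu_neg: "nu m (- d) = nu m d"
proof -
  have "Sum_any (\<lambda>y. (tri m y - tri m (y - - d))\<^sup>2) = Sum_any (\<lambda>y. (tri m (y - d) - tri m y)\<^sup>2)"
    using SA_shift[of "\<lambda>y. (tri m y - tri m (y + d))\<^sup>2" "-d"] by simp
  also have "\<dots> = Sum_any (\<lambda>y. (tri m y - tri m (y - d))\<^sup>2)"
    by (simp add: power2_commute)
  finally show ?thesis unfolding nu_def by simp
qed

lemma nu_nonneg: "0 \<le> nu m d"
  unfolding nu_def Sum_any.expand_set by (intro real_sqrt_ge_zero sum_nonneg) simp

definition sc :: "int \<Rightarrow> point \<Rightarrow> point" where
  "sc k v = (case v of (a, b, c) \<Rightarrow> (k * a, k * b, k * c))"

lemma nu_sc_nat: "nu m (sc (int n) u) \<le> real n * nu m u"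
proof (induction n)
  case 0
  have "sc 0 u = 0" by (cases u) (simp add: sc_def zero_prod_def)
  then show ?case by (simp add: nu_def)
next
  case (Suc n)
  have "sc (int (Suc n)) u = sc (int n) u + u" by (cases u) (simp add: sc_def algebra_simps)
  then have "nu m (sc (int (Suc n)) u) \<le> nu m (sc (int n) u) + nu m u" using nu_triangle by simp
  then show ?case using Suc by (simp add: algebra_simps)
qed

lemma nu_sc: "nu m (sc k u) \<le> \<bar>real_of_int k\<bar> * nu m u"
proof (cases "0 \<le> k")
  case True
  then show ?thesis using nu_sc_nat[of m "nat k" u] by simp
next
  case False
  have "sc k u = - sc (int (nat (-k))) u" using False by (cases u) (simp add: sc_def)
  then show ?thesis using nu_sc_nat[of m "nat (-k)" u] nu_neg False by simp
qed

lemma sum9_expand: "(\<Sum>i<(3::nat). \<Sum>k<(3::nat). f i k) = f 0 0 + f 0 1 + f 0 2 + f 1 0 + f 1 1 + f 1 2 + f 2 0 + f 2 1 + (f 2 2 :: real)"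
  by (simp add: eval_nat_numeral)

lemma two_le_sum: "R m 0 - R m (1, 0, -1) + (R m 0 - R m (0, 1, -1)) \<le> 9 * (R m 0 - R (Suc m) 0)"
proof -
  have "9 * R (Suc m) 0 = (\<Sum>i<3. \<Sum>k<3. R m (0 - ev i + ev k))"
    by (simp add: R_rec)
  moreover have "\<And>v. R m v \<le> R m 0" by (rule R_le_R0)
  ultimately show ?thesis unfolding sum9_expand
    by (simp add: ev_def zero_prod_def) (smt (verit) R_le_R0)
qed

lemma gap_bound: "R m 0 - R m (x, y, - x - y) \<le> 9 * (real_of_int x ^ 2 + real_of_int y ^ 2) * (R m 0 - R (Suc m) 0)"
proof -
  let ?u1 = "(1, 0, -1) :: point" and ?u2 = "(0, 1, -1) :: point"
  have d: "(x, y, - x - y) = sc x ?u1 + sc y ?u2" by (simp add: sc_def)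
  have "nu m (x, y, - x - y) \<le> nu m (sc x ?u1) + nu m (sc y ?u2)" unfolding d by (rule nu_triangle)
  also have "\<dots> \<le> \<bar>real_of_int x\<bar> * nu m ?u1 + \<bar>real_of_int y\<bar> * nu m ?u2"
    by (intro add_mono nu_sc)
  finally have n1: "nu m (x, y, - x - y) \<le> \<bar>real_of_int x\<bar> * nu m ?u1 + \<bar>real_of_int y\<bar> * nu m ?u2" .
  have "(nu m (x, y, - x - y))\<^sup>2 \<le> (\<bar>real_of_int x\<bar> * nu m ?u1 + \<bar>real_of_int y\<bar> * nu m ?u2)\<^sup>2"
    using n1 nu_nonneg by (intro power_mono) auto
  also have "\<dots> \<le> (real_of_int x ^ 2 + real_of_int y ^ 2) * ((nu m ?u1)\<^sup>2 + (nu m ?u2)\<^sup>2)"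
  proof -
    have cs: "(a * p + b * q)\<^sup>2 \<le> (a\<^sup>2 + b\<^sup>2) * (p\<^sup>2 + q\<^sup>2)" for a b p q :: real
    proof -
      have "0 \<le> (a * q - b * p)\<^sup>2" by simp
      then show ?thesis by (simp add: power2_eq_square algebra_simps)
    qed
    show ?thesis using cs[of "\<bar>real_of_int x\<bar>" "nu m ?u1" "\<bar>real_of_int y\<bar>" "nu m ?u2"] by simp
  qed
  also have "(nu m ?u1)\<^sup>2 + (nu m ?u2)\<^sup>2 \<le> 18 * (R m 0 - R (Suc m) 0)"
    unfolding nu_sq using two_le_sum[of m] by simp
  finally have "(nu m (x, y, - x - y))\<^sup>2 \<le> (real_of_int x ^ 2 + real_of_int y ^ 2) * (18 * (R m 0 - R (Suc m) 0))"
    by (simp add: mult_left_mono)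
  then show ?thesis unfolding nu_sq by (simp add: algebra_simps; linarith)
qed


definition ca :: "point \<Rightarrow> real" where "ca y = real_of_int (fst y)"
definition cb :: "point \<Rightarrow> real" where "cb y = real_of_int (fst (snd y))"

lemma ca_shift: "ca (y + ev i) = ca y + (if i = 0 then 1 else 0)"
  by (cases y) (simp add: ca_def ev_def)
lemma cb_shift: "i < 3 \<Longrightarrow> cb (y + ev i) = cb y + (if i = 1 then 1 else 0)"
  by (cases y) (auto simp: cb_def ev_def)

lemma E_cong_add: "E m (\<lambda>y. f y + c) = E m f + c"
  using E_add[of m f "\<lambda>y. c"] E_lin[of m c "\<lambda>y. 1"] E_const by simp

lemma s3: "(\<Sum>i<3. f i) = f 0 + f 1 + (f 2::real)" for f :: "nat \<Rightarrow> real"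
  by (simp add: eval_nat_numeral)

lemma E_ca: "E m ca = real m / 3"
proof (induction m)
  case 0
  have "box 0 = {(0,0,0)}" by (auto simp: box_def)
  then show ?case by (simp add: E_def tri_def ca_def)
next
  case (Suc m)
  show ?case unfolding E_rec s3 ca_shift using Suc by (simp add: E_cong_add)
qed

lemma E_cb: "E m cb = real m / 3"
proof (induction m)
  case 0
  have "box 0 = {(0,0,0)}" by (auto simp: box_def)
  then show ?case by (simp add: E_def tri_def cb_def)
next
  case (Suc m)
  show ?case unfolding E_rec s3 by (simp add: cb_shift E_cong_add Suc)
qed

lemma E_ca2: "E m (\<lambda>y. (ca y)\<^sup>2) = real m * (real m + 2) / 9"
proof (induction m)
  case 0
  have "box 0 = {(0,0,0)}" by (auto simp: box_def)
  then show ?case by (simp add: E_def tri_def ca_def)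
next
  case (Suc m)
  have e: "E m (\<lambda>y. (ca y + 1)\<^sup>2) = E m (\<lambda>y. (ca y)\<^sup>2) + 2 * E m ca + 1"
  proof -
    have "E m (\<lambda>y. (ca y + 1)\<^sup>2) = E m (\<lambda>y. ((ca y)\<^sup>2 + 2 * ca y) + 1)"
      by (simp add: power2_eq_square algebra_simps)
    then show ?thesis by (simp add: E_cong_add E_add E_lin)
  qed
  show ?case unfolding E_rec s3 ca_shift using Suc e E_ca[of m]
    by (simp add: field_simps)
qed

lemma E_cb2: "E m (\<lambda>y. (cb y)\<^sup>2) = real m * (real m + 2) / 9"
proof (induction m)
  case 0
  have "box 0 = {(0,0,0)}" by (auto simp: box_def)
  then show ?case by (simp add: E_def tri_def cb_def)
next
  case (Suc m)
  have e: "E m (\<lambda>y. (cb y + 1)\<^sup>2) = E m (\<lambda>y. (cb y)\<^sup>2) + 2 * E m cb + 1"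
  proof -
    have "E m (\<lambda>y. (cb y + 1)\<^sup>2) = E m (\<lambda>y. ((cb y)\<^sup>2 + 2 * cb y) + 1)"
      by (simp add: power2_eq_square algebra_simps)
    then show ?thesis by (simp add: E_cong_add E_add E_lin)
  qed
  show ?case unfolding E_rec s3 using Suc e E_cb[of m]
    by (simp add: cb_shift field_simps)
qed

lemma E_quad: "E m (\<lambda>y. (f y)\<^sup>2 + c * f y + k) = E m (\<lambda>y. (f y)\<^sup>2) + c * E m f + k"
  using E_cong_add[of m "\<lambda>y. (f y)\<^sup>2 + c * f y" k] E_add[of m "\<lambda>y. (f y)\<^sup>2" "\<lambda>y. c * f y"] E_lin[of m c f]
  by simp

lemma E_var: "E m (\<lambda>y. (f y - real m / 3)\<^sup>2) = E m (\<lambda>y. (f y)\<^sup>2) - 2 * (real m / 3) * E m f + (real m / 3)\<^sup>2"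
proof -
  have "E m (\<lambda>y. (f y - real m / 3)\<^sup>2) = E m (\<lambda>y. (f y)\<^sup>2 + (- 2 * (real m / 3)) * f y + (real m / 3)\<^sup>2)"
    by (simp add: power2_diff algebra_simps)
  then show ?thesis unfolding E_quad by simp
qed

lemma var_a: "E m (\<lambda>y. (ca y - real m / 3)\<^sup>2) = 2 * real m / 9"
  unfolding E_var E_ca2 E_ca by (simp add: field_simps power2_eq_square)
lemma var_b: "E m (\<lambda>y. (cb y - real m / 3)\<^sup>2) = 2 * real m / 9"
  unfolding E_var E_cb2 E_cb by (simp add: field_simps power2_eq_square)

lemma card_int_interval: fixes lo hi :: real assumes "lo \<le> hi"
  shows "real (card {a::int. lo \<le> real_of_int a \<and> real_of_int a \<le> hi}) \<le> hi - lo + 1"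
proof -
  have "{a::int. lo \<le> real_of_int a \<and> real_of_int a \<le> hi} = {\<lceil>lo\<rceil>..\<lfloor>hi\<rfloor>}"
    by (auto simp: ceiling_le_iff le_floor_iff)
  then have c: "card {a::int. lo \<le> real_of_int a \<and> real_of_int a \<le> hi} = nat (\<lfloor>hi\<rfloor> - \<lceil>lo\<rceil> + 1)" by simp
  have f1: "real_of_int \<lfloor>hi\<rfloor> \<le> hi" by (rule of_int_floor_le)
  have f2: "lo \<le> real_of_int \<lceil>lo\<rceil>" by (rule le_of_int_ceiling)
  show ?thesis
  proof (cases "\<lfloor>hi\<rfloor> - \<lceil>lo\<rceil> + 1 \<le> 0")
    case True then show ?thesis unfolding c using assms by simp
  next
    case False
    then have "real (nat (\<lfloor>hi\<rfloor> - \<lceil>lo\<rceil> + 1)) = real_of_int \<lfloor>hi\<rfloor> - real_of_int \<lceil>lo\<rceil> + 1"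
      by (simp add: of_nat_nat)
    then show ?thesis unfolding c using f1 f2 by linarith
  qed
qed

lemma q_lower: assumes "1 \<le> m" shows "1 / (36 * real m) \<le> R m 0"
proof -
  let ?s = "sqrt (real m)" and ?mu = "real m / 3"
  define A where "A = {y\<in>box m. tri m y \<noteq> 0 \<and> \<bar>ca y - ?mu\<bar> \<le> ?s \<and> \<bar>cb y - ?mu\<bar> \<le> ?s}"
  have finA: "finite A" unfolding A_def by simp
  have Asub: "A \<subseteq> box m" unfolding A_def by auto
  have mpos: "0 < real m" using assms by simp
  \<comment> \<open>Markov bound on the complement\<close>
  have out: "(\<Sum>y\<in>box m - A. tri m y) \<le> (\<Sum>y\<in>box m. tri m y * ((ca y - ?mu)\<^sup>2 / real m + (cb y - ?mu)\<^sup>2 / real m))"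
  proof -
    have "(\<Sum>y\<in>box m - A. tri m y) \<le> (\<Sum>y\<in>box m - A. tri m y * ((ca y - ?mu)\<^sup>2 / real m + (cb y - ?mu)\<^sup>2 / real m))"
    proof (rule sum_mono)
      fix y assume y: "y \<in> box m - A"
      have "tri m y = 0 \<or> \<bar>ca y - ?mu\<bar> > ?s \<or> \<bar>cb y - ?mu\<bar> > ?s" using y unfolding A_def by auto
      moreover {
      assume "\<bar>ca y - ?mu\<bar> > ?s \<or> \<bar>cb y - ?mu\<bar> > ?s"
      then have "real m < (ca y - ?mu)\<^sup>2 \<or> real m < (cb y - ?mu)\<^sup>2"
        by (metis abs_ge_zero power2_abs real_sqrt_abs real_sqrt_less_mono real_sqrt_power abs_of_nonneg real_sqrt_ge_zero real_sqrt_less_iff)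
      then have "1 \<le> (ca y - ?mu)\<^sup>2 / real m + (cb y - ?mu)\<^sup>2 / real m"
        using mpos by (auto simp: field_simps add_increasing add_increasing2)
      then have "tri m y \<le> tri m y * ((ca y - ?mu)\<^sup>2 / real m + (cb y - ?mu)\<^sup>2 / real m)"
        using tri_nonneg[of m y] by (simp add: mult_le_cancel_left1) }
      ultimately show "tri m y \<le> tri m y * ((ca y - ?mu)\<^sup>2 / real m + (cb y - ?mu)\<^sup>2 / real m)"
        by auto
    qed
    also have "\<dots> \<le> (\<Sum>y\<in>box m. tri m y * ((ca y - ?mu)\<^sup>2 / real m + (cb y - ?mu)\<^sup>2 / real m))"
      by (rule sum_mono2) (auto intro!: mult_nonneg_nonneg tri_nonneg)
    finally show ?thesis .
  qed
  have "(\<Sum>y\<in>box m. tri m y * ((ca y - ?mu)\<^sup>2 / real m + (cb y - ?mu)\<^sup>2 / real m))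
        = E m (\<lambda>y. (ca y - ?mu)\<^sup>2) / real m + E m (\<lambda>y. (cb y - ?mu)\<^sup>2) / real m"
    unfolding E_def by (simp add: distrib_left sum.distrib sum_divide_distrib)
  also have "\<dots> = 4 / 9" unfolding var_a var_b using mpos by simp
  finally have out2: "(\<Sum>y\<in>box m - A. tri m y) \<le> 4 / 9" using out by simp
  have tot: "(\<Sum>y\<in>box m. tri m y) = 1" using E_const[of m] by (simp add: E_def)
  have "(\<Sum>y\<in>box m. tri m y) = (\<Sum>y\<in>A. tri m y) + (\<Sum>y\<in>box m - A. tri m y)"
    using Asub by (simp add: sum.subset_diff)
  then have inA: "5 / 9 \<le> (\<Sum>y\<in>A. tri m y)" using tot out2 by simp
  define I where "I = {a::int. ?mu - ?s \<le> real_of_int a \<and> real_of_int a \<le> ?mu + ?s}"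
  have s1: "1 \<le> ?s" using assms by simp
  have cardI: "real (card I) \<le> 2 * ?s + 1"
    using card_int_interval[of "?mu - ?s" "?mu + ?s"] s1 unfolding I_def by simp
  have finI: "finite I"
  proof -
    have "I = {\<lceil>?mu - ?s\<rceil>..\<lfloor>?mu + ?s\<rfloor>}" unfolding I_def by (auto simp: ceiling_le_iff le_floor_iff)
    then show ?thesis by simp
  qed
  have tri_sum: "tri m (a, b, c) \<noteq> 0 \<Longrightarrow> c = int m - a - b" for a b c
    by (simp add: tri_def split: if_splits)
  have sub: "A \<subseteq> (\<lambda>(a, b). (a, b, int m - a - b)) ` (I \<times> I)"
  proof
    fix y assume "y \<in> A"
    then obtain a b c where y: "y = (a, b, c)" and yA: "(a, b, c) \<in> A" by (cases y) auto
    from yA have "a \<in> I" "b \<in> I" unfolding A_def I_def ca_def cb_def by (auto simp: abs_le_iff)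
    moreover have "c = int m - a - b" using yA tri_sum unfolding A_def by auto
    ultimately show "y \<in> (\<lambda>(a, b). (a, b, int m - a - b)) ` (I \<times> I)"
      unfolding y by (auto intro: image_eqI[of _ _ "(a, b)"])
  qed
  have "card A \<le> card ((\<lambda>(a, b). (a, b, int m - a - b)) ` (I \<times> I))"
    by (rule card_mono) (use finI sub in auto)
  also have "\<dots> \<le> card (I \<times> I)" by (rule card_image_le) (use finI in auto)
  also have "\<dots> = card I * card I" by (simp add: card_cartesian_product)
  finally have "real (card A) \<le> real (card I) * real (card I)" by (metis of_nat_le_iff of_nat_mult)
  also have "\<dots> \<le> (2 * ?s + 1) * (2 * ?s + 1)" using cardI by (intro mult_mono) auto
  also have "\<dots> \<le> (3 * ?s) * (3 * ?s)" using s1 by (intro mult_mono) auto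
  also have "\<dots> = 9 * real m" by simp
  finally have cardA: "real (card A) \<le> 9 * real m" .
  have h1: "(\<Sum>y\<in>A. tri m y)\<^sup>2 \<le> (\<Sum>y\<in>A. (tri m y)\<^sup>2) * real (card A)"
    by (rule sum_squared_le_sum_of_squares)
  have "(\<Sum>y\<in>A. (tri m y)\<^sup>2) \<le> (\<Sum>y\<in>box m. (tri m y)\<^sup>2)"
    by (rule sum_mono2) (use Asub in auto)
  also have "(\<Sum>y\<in>box m. (tri m y)\<^sup>2) = R m 0"
    by (simp add: R_def E_def power2_eq_square)
  finally have h2: "(\<Sum>y\<in>A. (tri m y)\<^sup>2) \<le> R m 0" .
  have "(\<Sum>y\<in>A. (tri m y)\<^sup>2) * real (card A) \<le> R m 0 * (9 * real m)"
    using h2 cardA R_nonneg[of m 0] by (intro mult_mono) (auto intro: sum_nonneg)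
  with h1 have "(\<Sum>y\<in>A. tri m y)\<^sup>2 \<le> R m 0 * (9 * real m)" by linarith
  moreover have "(5/9)\<^sup>2 \<le> (\<Sum>y\<in>A. tri m y)\<^sup>2" using inA by (intro power_mono) auto
  ultimately have "25 / 81 \<le> R m 0 * (9 * real m)" by (simp add: power2_eq_square)
  then show ?thesis using mpos by (simp add: field_simps)
qed


definition cc :: "nat \<Rightarrow> real" where "cc n = real ((2 * n) choose n) / 4 ^ n"

lemma cc_alg: fixes F f P y :: real assumes "0 < f" "0 < P" "0 < y"
  shows "(2 * y) * ((2 * y - 1) * F) / ((y * f) * (y * f)) / (4 * P) = F / (f * f) / P * (2 * y - 1) / (2 * y)"
  using assms by (simp add: field_simps)

lemma cc_rec: "cc (Suc n) = cc n * (2 * real n + 1) / (2 * real n + 2)"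
proof -
  define y where "y = real n + 1"
  have a: "real ((2 * n) choose n) = fact (2 * n) / (fact n * fact n)"
  proof -
    have "2 * n - n = n" by simp
    then show ?thesis using binomial_fact[of n "2 * n"] by (simp only:) simp
  qed
  have b: "real ((2 * Suc n) choose Suc n) = fact (2 * Suc n) / (fact (Suc n) * fact (Suc n))"
  proof -
    have "2 * Suc n - Suc n = Suc n" by simp
    then show ?thesis using binomial_fact[of "Suc n" "2 * Suc n"] by (simp only:) simp
  qed
  have s: "2 * Suc n = Suc (Suc (2 * n))" by simp
  have c: "(fact (2 * Suc n) :: real) = (2 * y) * ((2 * y - 1) * fact (2 * n))"
    unfolding s fact_Suc y_def by (simp add: algebra_simps)
  have d: "(fact (Suc n) :: real) = y * fact n" unfolding fact_Suc y_def by simp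
  have "cc (Suc n) = (2 * y) * ((2 * y - 1) * fact (2 * n)) / ((y * fact n) * (y * fact n)) / (4 * 4 ^ n)"
    unfolding cc_def b c d by simp
  also have "\<dots> = cc n * (2 * y - 1) / (2 * y)"
    unfolding cc_def a by (rule cc_alg) (auto simp: y_def)
  also have "\<dots> = cc n * (2 * real n + 1) / (2 * real n + 2)"
    by (simp add: y_def algebra_simps)
  finally show ?thesis .
qed

lemma cc_nonneg: "0 \<le> cc n" by (simp add: cc_def)

lemma cc_l1: fixes c x :: real assumes "0 \<le> x"
  shows "(c * (2 * x + 1) / (2 * x + 2))\<^sup>2 * (3 * x + 4) = (c\<^sup>2 * (3 * x + 1)) * ((2 * x + 1)\<^sup>2 * (3 * x + 4) / ((3 * x + 1) * (2 * x + 2)\<^sup>2))"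
proof -
  have "3 * x + 1 > 0" "2 * x + 2 > 0" using assms by linarith+
  then show ?thesis by (simp add: power_divide power_mult_distrib)
qed

lemma cc_poly: fixes x :: real assumes "0 \<le> x" shows "(2 * x + 1)\<^sup>2 * (3 * x + 4) \<le> (3 * x + 1) * (2 * x + 2)\<^sup>2"
  using assms by (simp add: power2_eq_square algebra_simps)

lemma cc_l2: fixes x :: real assumes "0 \<le> x" shows "(2 * x + 1)\<^sup>2 * (3 * x + 4) / ((3 * x + 1) * (2 * x + 2)\<^sup>2) \<le> 1"
proof -
  have dpos: "0 < (3 * x + 1) * (2 * x + 2)\<^sup>2" using assms by (intro mult_pos_pos) auto
  show ?thesis by (subst pos_divide_le_eq[OF dpos]) (use cc_poly[OF assms] in simp)
qed

lemma cc_bound: "(cc n)\<^sup>2 * (3 * real n + 1) \<le> 1"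
proof (induction n)
  case 0 then show ?case by (simp add: cc_def)
next
  case (Suc n)
  let ?x = "real n"
  have e: "3 * real (Suc n) + 1 = 3 * ?x + 4" by simp
  have "(cc (Suc n))\<^sup>2 * (3 * real (Suc n) + 1) = ((cc n)\<^sup>2 * (3 * ?x + 1)) * ((2 * ?x + 1)\<^sup>2 * (3 * ?x + 4) / ((3 * ?x + 1) * (2 * ?x + 2)\<^sup>2))"
    unfolding cc_rec e by (rule cc_l1) simp
  also have "\<dots> \<le> 1 * 1"
  proof (rule mult_mono)
    show "(cc n)\<^sup>2 * (3 * ?x + 1) \<le> 1" by (rule Suc.IH)
    show "(2 * ?x + 1)\<^sup>2 * (3 * ?x + 4) / ((3 * ?x + 1) * (2 * ?x + 2)\<^sup>2) \<le> 1"
      by (rule cc_l2) simp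
    show "0 \<le> (2 * ?x + 1)\<^sup>2 * (3 * ?x + 4) / ((3 * ?x + 1) * (2 * ?x + 2)\<^sup>2)"
      by (intro divide_nonneg_nonneg mult_nonneg_nonneg) auto
  qed simp
  finally show ?case by simp
qed

lemma aux_div: fixes x a b c :: real
  assumes "0 \<le> x" "x * a \<le> 1" "0 < b" "b \<le> c * a" "0 < c" shows "x \<le> c / b"
proof -
  have "x * b \<le> x * (c * a)" using assms by (intro mult_left_mono) auto
  also have "\<dots> = c * (x * a)" by simp
  also have "\<dots> \<le> c * 1" using assms by (intro mult_left_mono) auto
  finally have "x * b \<le> c" by simp
  then show ?thesis by (rule iffD2[OF pos_le_divide_eq[OF assms(3)]])
qed

lemma cc_sq_le: "(cc n)\<^sup>2 \<le> 1 / (real n + 1)"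
  by (rule aux_div[of "(cc n)\<^sup>2" "3 * real n + 1" "real n + 1" 1, OF _ cc_bound[of n]]) auto

lemma p4: "(2::real) ^ (2 * i) = 4 ^ i" by (simp add: power_mult)

lemma central_bound: "(real (j choose k) / 2 ^ j)\<^sup>2 \<le> 2 / (real j + 1)"
proof -
  have mx: "real (j choose k) / 2 ^ j \<le> real (j choose (j div 2)) / 2 ^ j"
    using binomial_maximum[of j k] by (simp add: divide_right_mono)
  have cen: "(real (j choose (j div 2)) / 2 ^ j)\<^sup>2 \<le> 2 / (real j + 1)"
  proof (cases "even j")
    case True
    then obtain i where j: "j = 2 * i" by auto
    have "real (j choose (j div 2)) / 2 ^ j = cc i" unfolding j p4 by (simp add: cc_def)
    moreover have "(cc i)\<^sup>2 \<le> 2 / (real j + 1)"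
      unfolding j by (rule aux_div[OF _ cc_bound[of i]]) auto
    ultimately show ?thesis by simp
  next
    case False
    then obtain i where j: "j = 2 * i + 1" using oddE by blast
    have jd: "j div 2 = i" by (simp add: j)
    have "(2 * Suc i) choose Suc i = (Suc (2 * i) choose i) + (Suc (2 * i) choose Suc i)" by simp
    moreover have "Suc (2 * i) choose Suc i = Suc (2 * i) choose i"
      using binomial_symmetric[of "Suc i" "Suc (2*i)"] by simp
    ultimately have "(2 * Suc i) choose Suc i = 2 * (Suc (2 * i) choose i)" by simp
    then have e2: "real ((2 * Suc i) choose Suc i) = 2 * real (Suc (2 * i) choose i)"
      by (metis of_nat_mult of_nat_numeral)
    have pj: "(2::real) ^ j = 2 * 4 ^ i" unfolding j using p4[of i] by simp
    have "cc (Suc i) = 2 * real (Suc (2 * i) choose i) / 4 ^ Suc i"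
      unfolding cc_def e2 ..
    then have "real (j choose (j div 2)) / 2 ^ j = cc (Suc i)"
      unfolding jd pj by (simp add: j del: binomial_Suc_Suc)
    moreover have "(cc (Suc i))\<^sup>2 \<le> 2 / (real j + 1)"
      unfolding j by (rule aux_div[OF _ cc_bound[of "Suc i"]]) auto
    ultimately show ?thesis by simp
  qed
  have "(real (j choose k) / 2 ^ j)\<^sup>2 \<le> (real (j choose (j div 2)) / 2 ^ j)\<^sup>2"
    using mx by (intro power_mono) auto
  with cen show ?thesis by linarith
qed


lemma binom3: "(\<Sum>k\<le>n. real (n choose k) * 2 ^ k) = 3 ^ n"
  using binomial_ring[of "2::real" 1 n] by simp

lemma harm_binom: "(\<Sum>j\<le>m. real (m choose j) * 2 ^ j / (real j + 1)) \<le> 3 ^ (Suc m) / (2 * (real m + 1))"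
proof -
  have e: "real (m choose j) / (real j + 1) = real (Suc m choose Suc j) / (real m + 1)" for j
  proof -
    have "real (Suc m) * real (m choose j) = real (Suc m choose Suc j) * real (Suc j)"
      using Suc_times_binomial_eq[of m j] by (metis of_nat_mult)
    then show ?thesis by (simp add: field_simps)
  qed
  have "(\<Sum>j\<le>m. real (m choose j) * 2 ^ j / (real j + 1)) = (\<Sum>j\<le>m. real (Suc m choose Suc j) * 2 ^ Suc j) / (2 * (real m + 1))"
    unfolding sum_divide_distrib
  proof (rule sum.cong)
    fix j assume "j \<in> {..m}"
    have "real (m choose j) * 2 ^ j / (real j + 1) = (real (m choose j) / (real j + 1)) * 2 ^ j" by simp
    also have "\<dots> = real (Suc m choose Suc j) * 2 ^ Suc j / (2 * (real m + 1))"
    proof -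
      have h: "(X::real) / y * p = X * (2 * p) / (2 * y)" for X y p by simp
      show ?thesis unfolding e h power_Suc ..
    qed
    finally show "real (m choose j) * 2 ^ j / (real j + 1) = real (Suc m choose Suc j) * 2 ^ Suc j / (2 * (real m + 1))" .
  qed simp
  also have "(\<Sum>j\<le>m. real (Suc m choose Suc j) * 2 ^ Suc j) = 3 ^ Suc m - 1"
    using binom3[of "Suc m"] by (simp add: sum.atMost_Suc_shift del: sum.atMost_Suc)
  finally show ?thesis by (simp add: divide_right_mono)
qed

lemma thin_nat: assumes "k \<le> m" shows "(\<Sum>j\<le>m. (m choose j) * (j choose k)) = (m choose k) * 2 ^ (m - k)"
proof -
  have split: "{..m} = {..<k} \<union> {k..m}" using assms by auto
  have "(\<Sum>j\<le>m. (m choose j) * (j choose k)) = (\<Sum>j\<in>{..<k}. (m choose j) * (j choose k)) + (\<Sum>j\<in>{k..m}. (m choose j) * (j choose k))"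
    unfolding split by (rule sum.union_disjoint) auto
  also have "(\<Sum>j\<in>{..<k}. (m choose j) * (j choose k)) = 0" by simp
  also have "(\<Sum>j\<in>{k..m}. (m choose j) * (j choose k)) = (\<Sum>j\<in>{k..m}. (m choose k) * ((m - k) choose (j - k)))"
    by (rule sum.cong) (auto simp: choose_mult)
  also have "\<dots> = (m choose k) * (\<Sum>j\<in>{k..m}. (m - k) choose (j - k))" by (simp add: sum_distrib_left)
  also have "(\<Sum>j\<in>{k..m}. (m - k) choose (j - k)) = (\<Sum>i\<in>{0..m-k}. (m - k) choose i)"
  proof -
    have "{k..m} = {0 + k..(m - k) + k}" using assms by simp
    then show ?thesis by (simp only: sum.shift_bounds_cl_nat_ivl) simp
  qed
  also have "\<dots> = 2 ^ (m - k)" by (simp add: atLeast0AtMost choose_row_sum)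
  finally show ?thesis by simp
qed

definition Wb :: "nat \<Rightarrow> nat \<Rightarrow> real" where "Wb m n = real (m choose n) * 2 ^ n / 3 ^ m"

lemma Wb_nonneg: "0 \<le> Wb m n" by (simp add: Wb_def)

lemma Wb_sum: "(\<Sum>n\<le>m. Wb m n) = 1"
  unfolding Wb_def using binom3[of m] by (simp add: sum_divide_distrib[symmetric])

lemma Wb_harm: "(\<Sum>n\<le>m. Wb m n / (real n + 1)) \<le> 3 / (2 * (real m + 1))"
proof -
  have "(\<Sum>n\<le>m. Wb m n / (real n + 1)) = (\<Sum>j\<le>m. real (m choose j) * 2 ^ j / (real j + 1)) / 3 ^ m"
    unfolding Wb_def by (simp add: sum_divide_distrib mult.commute)
  also have "\<dots> \<le> (3 ^ Suc m / (2 * (real m + 1))) / 3 ^ m"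
    by (rule divide_right_mono[OF harm_binom]) simp
  also have "\<dots> = 3 / (2 * (real m + 1))" by simp
  finally show ?thesis .
qed

lemma wCS: fixes w d :: "nat \<Rightarrow> real" assumes "\<And>j. j \<in> A \<Longrightarrow> 0 \<le> w j"
  shows "(\<Sum>j\<in>A. w j * d j)\<^sup>2 \<le> (\<Sum>j\<in>A. w j) * (\<Sum>j\<in>A. w j * (d j)\<^sup>2)"
proof -
  have "(\<Sum>j\<in>A. sqrt (w j) * (sqrt (w j) * d j))\<^sup>2 \<le> (\<Sum>j\<in>A. (sqrt (w j))\<^sup>2) * (\<Sum>j\<in>A. (sqrt (w j) * d j)\<^sup>2)"
    by (rule Cauchy_Schwarz_ineq_sum)
  moreover have "(\<Sum>j\<in>A. sqrt (w j) * (sqrt (w j) * d j)) = (\<Sum>j\<in>A. w j * d j)"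
    by (rule sum.cong) (use assms in \<open>auto simp: real_sqrt_mult_self mult.assoc[symmetric]\<close>)
  moreover have "(\<Sum>j\<in>A. (sqrt (w j))\<^sup>2) = (\<Sum>j\<in>A. w j)"
    by (rule sum.cong) (use assms in auto)
  moreover have "(\<Sum>j\<in>A. (sqrt (w j) * d j)\<^sup>2) = (\<Sum>j\<in>A. w j * (d j)\<^sup>2)"
    by (rule sum.cong) (use assms in \<open>auto simp: power_mult_distrib\<close>)
  ultimately show ?thesis by simp
qed

lemma Wb_max: assumes "n \<le> m" shows "(Wb m n)\<^sup>2 \<le> 3 / (real m + 1)"
proof -
  let ?k = "m - n"
  have "Wb m n = real (m choose ?k) * 2 ^ (m - ?k) / 3 ^ m"
    unfolding Wb_def using assms binomial_symmetric[OF assms] by simp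
  also have "real (m choose ?k) * 2 ^ (m - ?k) = (\<Sum>j\<le>m. real (m choose j) * real (j choose ?k))"
    using thin_nat[of ?k m] by (metis (mono_tags, lifting) diff_le_self of_nat_mult of_nat_numeral of_nat_power of_nat_sum sum.cong)
  finally have eqW: "Wb m n = (\<Sum>j\<le>m. Wb m j * (real (j choose ?k) / 2 ^ j))"
    unfolding Wb_def by (simp add: sum_divide_distrib)
  have "(Wb m n)\<^sup>2 \<le> (\<Sum>j\<le>m. Wb m j) * (\<Sum>j\<le>m. Wb m j * (real (j choose ?k) / 2 ^ j)\<^sup>2)"
    unfolding eqW by (rule wCS) (rule Wb_nonneg)
  also have "\<dots> \<le> 1 * (\<Sum>j\<le>m. Wb m j * (2 / (real j + 1)))"
    unfolding Wb_sum by (intro mult_left_mono sum_mono mult_left_mono central_bound Wb_nonneg) auto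
  also have "\<dots> = 2 * (\<Sum>j\<le>m. Wb m j / (real j + 1))" by (simp add: sum_distrib_left mult.commute)
  also have "\<dots> \<le> 2 * (3 / (2 * (real m + 1)))" by (intro mult_left_mono Wb_harm) auto
  also have "2 * (3 / (2 * (real m + 1))) = 3 / (real m + 1)"
  proof -
    have g: "0 < y \<Longrightarrow> 2 * (3 / (2 * y)) = 3 / (y::real)" for y by (simp add: field_simps)
    show ?thesis by (rule g) simp
  qed
  finally show ?thesis .
qed


lemma tri_alg: fixes M N K A B T :: real assumes "0 < N" "0 < K" "0 < A" "0 < B" "0 < T"
  shows "M / (A * B * K * T) = M / (N * K) * (N / (A * B)) / T"
  using assms by (simp add: field_simps)

lemma tri_val: assumes "a \<le> n" "n \<le> m"
  shows "tri m (int a, int (n - a), int (m - n)) = real (m choose n) * real (n choose a) / 3 ^ m"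
proof -
  have c: "int a + int (n - a) + int (m - n) = int m" using assms by simp
  have "tri m (int a, int (n - a), int (m - n)) = fact m / (fact a * fact (n - a) * fact (m - n) * 3 ^ m)"
  proof -
    have e1: "nat (int n - int a) = n - a" "nat (int m - int n) = m - n" using assms by auto
    show ?thesis unfolding tri_def using c assms e1 by simp
  qed
  also have "\<dots> = fact m / (fact n * fact (m - n)) * (fact n / (fact a * fact (n - a))) / 3 ^ m"
    by (rule tri_alg) auto
  also have "\<dots> = real (m choose n) * real (n choose a) / 3 ^ m"
    by (simp only: binomial_fact[OF assms(1), where 'a=real] binomial_fact[OF assms(2), where 'a=real])
  finally show ?thesis .
qed

lemma Wb_cc_alg: fixes C D :: real shows "(C * D / 3 ^ m)\<^sup>2 = (C / 3 ^ m)\<^sup>2 * D\<^sup>2"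
  by (simp add: power2_eq_square)

lemma q_formula: "R m 0 = (\<Sum>n\<le>m. (Wb m n)\<^sup>2 * cc n)"
proof -
  let ?f = "\<lambda>(n, a). (int a, int (n - a), int (m - n))"
  let ?S = "SIGMA n:{..m}. {..n}"
  have finS: "finite (?f ` ?S)" by simp
  have "R m 0 = Sum_any (\<lambda>y. (tri m y)\<^sup>2)"
    unfolding R_def E_SA by (simp add: power2_eq_square)
  also have "\<dots> = (\<Sum>y\<in>?f ` ?S. (tri m y)\<^sup>2)"
  proof (rule SA_superset[OF finS])
    fix y assume "(tri m y)\<^sup>2 \<noteq> 0"
    then have nz: "tri m y \<noteq> 0" by simp
    obtain a b c where y: "y = (a, b, c)" by (cases y)
    from nz have h: "0 \<le> a" "0 \<le> b" "0 \<le> c" "a + b + c = int m"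
      unfolding y tri_def by (auto split: if_splits)
    have m1: "(nat (a + b), nat a) \<in> ?S" using h by auto
    have m2: "y = ?f (nat (a + b), nat a)" using h y by auto
    show "y \<in> ?f ` ?S" by (rule image_eqI[where f="?f" and x="(nat (a + b), nat a)", OF m2 m1])
  qed
  also have "\<dots> = (\<Sum>x\<in>?S. (tri m (?f x))\<^sup>2)"
  proof (rule sum.reindex[unfolded comp_def])
    show "inj_on ?f ?S"
      by (auto simp: inj_on_def)
  qed
  also have "\<dots> = (\<Sum>(n, a)\<in>?S. (tri m (int a, int (n - a), int (m - n)))\<^sup>2)"
    by (rule sum.cong) auto
  also have "\<dots> = (\<Sum>n\<le>m. \<Sum>a\<le>n. (tri m (int a, int (n - a), int (m - n)))\<^sup>2)"
    by (rule sum.Sigma[symmetric]) auto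
  also have "\<dots> = (\<Sum>n\<le>m. (real (m choose n) / 3 ^ m)\<^sup>2 * real ((2 * n) choose n))"
  proof (rule sum.cong[OF refl])
    fix n assume n: "n \<in> {..m}"
    have "(\<Sum>a\<le>n. (tri m (int a, int (n - a), int (m - n)))\<^sup>2) = (\<Sum>a\<le>n. (real (m choose n) / 3 ^ m)\<^sup>2 * (real (n choose a))\<^sup>2)"
    proof (rule sum.cong[OF refl])
      fix a assume "a \<in> {..n}"
      then have an: "a \<le> n" by simp
      have nm: "n \<le> m" using n by simp
      show "(tri m (int a, int (n - a), int (m - n)))\<^sup>2 = (real (m choose n) / 3 ^ m)\<^sup>2 * (real (n choose a))\<^sup>2"
        by (simp only: tri_val[OF an nm] Wb_cc_alg)
    qed
    also have "\<dots> = (real (m choose n) / 3 ^ m)\<^sup>2 * real (\<Sum>a\<le>n. (n choose a)\<^sup>2)"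
      by (simp add: sum_distrib_left)
    also have "(\<Sum>a\<le>n. (n choose a)\<^sup>2) = (2 * n) choose n" by (rule choose_square_sum)
    finally show "(\<Sum>a\<le>n. (tri m (int a, int (n - a), int (m - n)))\<^sup>2) = (real (m choose n) / 3 ^ m)\<^sup>2 * real ((2 * n) choose n)" .
  qed
  also have "\<dots> = (\<Sum>n\<le>m. (Wb m n)\<^sup>2 * cc n)"
  proof (rule sum.cong[OF refl])
    fix n
    have "(4::real) ^ n = (2 ^ n)\<^sup>2" using p4[of n] by (simp add: power_mult[symmetric] mult.commute)
    then show "(real (m choose n) / 3 ^ m)\<^sup>2 * real ((2 * n) choose n) = (Wb m n)\<^sup>2 * cc n"
      unfolding Wb_def cc_def by (simp add: power_divide power_mult_distrib)
  qed
  finally show ?thesis .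
qed

lemma q_upper: "R m 0 \<le> 9 / (4 * (real m + 1))"
proof -
  let ?s = "sqrt (3 / (real m + 1))"
  let ?T = "\<Sum>n\<le>m. Wb m n * cc n"
  have Ws: "Wb m n \<le> ?s" if "n \<le> m" for n
    using Wb_max[OF that] Wb_nonneg[of m n] by (simp add: real_le_rsqrt)
  have "R m 0 \<le> (\<Sum>n\<le>m. ?s * (Wb m n * cc n))"
    unfolding q_formula
  proof (rule sum_mono)
    fix n assume "n \<in> {..m}"
    then have "Wb m n \<le> ?s" using Ws by simp
    then show "(Wb m n)\<^sup>2 * cc n \<le> ?s * (Wb m n * cc n)"
      using Wb_nonneg[of m n] cc_nonneg[of n]
      by (simp add: power2_eq_square mult_right_mono mult.assoc[symmetric])
  qed
  also have "\<dots> = ?s * ?T" by (simp add: sum_distrib_left)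
  finally have q1: "R m 0 \<le> ?s * ?T" .
  have "?T\<^sup>2 \<le> (\<Sum>n\<le>m. Wb m n) * (\<Sum>n\<le>m. Wb m n * (cc n)\<^sup>2)"
    by (rule wCS) (rule Wb_nonneg)
  also have "\<dots> \<le> 1 * (\<Sum>n\<le>m. Wb m n / (real n + 1))"
    unfolding Wb_sum
    by (intro mult_left_mono sum_mono) (auto simp: divide_inverse intro!: mult_left_mono Wb_nonneg cc_sq_le[unfolded divide_inverse, simplified])
  also have "\<dots> \<le> 3 / (2 * (real m + 1))" using Wb_harm by simp
  finally have T2: "?T\<^sup>2 \<le> 3 / (2 * (real m + 1))" .
  have T0: "0 \<le> ?T" by (intro sum_nonneg mult_nonneg_nonneg Wb_nonneg cc_nonneg)
  have "(R m 0)\<^sup>2 \<le> (?s * ?T)\<^sup>2" using q1 R_nonneg by (intro power_mono) auto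
  also have "\<dots> = (3 / (real m + 1)) * ?T\<^sup>2" by (simp add: power_mult_distrib)
  also have "\<dots> \<le> (3 / (real m + 1)) * (3 / (2 * (real m + 1)))" by (intro mult_left_mono T2) auto
  also have "\<dots> \<le> (9 / (4 * (real m + 1)))\<^sup>2"
  proof -
    have g: "0 < y \<Longrightarrow> (3 / y) * (3 / (2 * y)) \<le> (9 / (4 * y))\<^sup>2" for y :: real
      by (simp add: power2_eq_square field_simps)
    show ?thesis by (rule g) simp
  qed
  finally show ?thesis by (rule power2_le_imp_le) simp
qed


fun coef :: "nat \<Rightarrow> point \<Rightarrow> (point \<times> point) option \<Rightarrow> real" where
  "coef 0 v k = (if k = None then 1 else 0)"
| "coef (Suc n) v k = (1/3) * (\<Sum>i<3. coef n (v - ev i) k + (if k = Some (v - ev i, v) then 1 else 0))"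

definition supp :: "nat \<Rightarrow> point \<Rightarrow> (point \<times> point) option set" where
  "supp n v = {k. coef n v k \<noteq> 0}"

lemma coef_nonneg: "0 \<le> coef n v k"
proof (induction n arbitrary: v)
  case 0 then show ?case by simp
next
  case (Suc n)
  have "0 \<le> coef n (v - ev i) k + (if k = Some (v - ev i, v) then 1 else 0)" for i
    using Suc.IH[of "v - ev i"] by simp
  then show ?case by (simp add: sum_nonneg)
qed

lemma supp_Suc: "supp (Suc n) v = (\<Union>i<3. supp n (v - ev i)) \<union> (\<lambda>i. Some (v - ev i, v)) ` {..<3}"
proof -
  have "coef (Suc n) v k \<noteq> 0 \<longleftrightarrow> (\<exists>i<3. coef n (v - ev i) k \<noteq> 0 \<or> k = Some (v - ev i, v))" for k
  proof -
    have nn: "\<And>i. 0 \<le> coef n (v - ev i) k + (if k = Some (v - ev i, v) then 1 else 0)"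
      using coef_nonneg by (simp add: add_nonneg_nonneg)
    have "coef (Suc n) v k \<noteq> 0 \<longleftrightarrow> (\<exists>i\<in>{..<3}. coef n (v - ev i) k + (if k = Some (v - ev i, v) then 1 else 0) \<noteq> 0)"
      using sum_nonneg_eq_0_iff[of "{..<3::nat}" "\<lambda>i. coef n (v - ev i) k + (if k = Some (v - ev i, v) then 1 else 0)"] nn
      by auto
    also have "\<dots> \<longleftrightarrow> (\<exists>i<3. coef n (v - ev i) k \<noteq> 0 \<or> k = Some (v - ev i, v))"
      using coef_nonneg[of n _ k] by (auto simp: add_nonneg_eq_0_iff)
    finally show ?thesis .
  qed
  then show ?thesis unfolding supp_def by auto
qed

lemma supp_0: "supp 0 v = {None}" unfolding supp_def by (rule set_eqI) simp

lemma finite_supp[simp]: "finite (supp n v)"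
  by (induction n arbitrary: v) (auto simp: supp_Suc supp_0)

lemma coef_rank: "coef n u (Some (x, y)) \<noteq> 0 \<Longrightarrow> rank y \<le> rank u"
proof (induction n arbitrary: u)
  case 0 then show ?case by simp
next
  case (Suc n)
  then have "Some (x, y) \<in> supp (Suc n) u" by (simp add: supp_def)
  then obtain i where i: "i < 3" and dj: "Some (x, y) \<in> supp n (u - ev i) \<or> Some (x, y) = Some (u - ev i, u)"
    unfolding supp_Suc by auto
  from dj show ?case
  proof
    assume "Some (x, y) \<in> supp n (u - ev i)"
    then have "rank y \<le> rank (u - ev i)" using Suc.IH by (simp add: supp_def)
    then show ?thesis using rank_minus_ev[OF i] by simp
  next
    assume "Some (x, y) = Some (u - ev i, u)" then show ?thesis by simp
  qed
qed

lemma coef_edge: "coef n u (Some e) \<noteq> 0 \<Longrightarrow> rank u = int n \<Longrightarrow> e \<in> cover_edges"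
proof (induction n arbitrary: u)
  case 0 then show ?case by simp
next
  case (Suc n)
  then have "Some e \<in> supp (Suc n) u" by (simp add: supp_def)
  then obtain i where i: "i < 3" and dj: "Some e \<in> supp n (u - ev i) \<or> Some e = Some (u - ev i, u)"
    unfolding supp_Suc by auto
  from dj show ?case
  proof
    assume "Some e \<in> supp n (u - ev i)"
    moreover have "rank (u - ev i) = int n" using rank_minus_ev[OF i] Suc.prems by simp
    ultimately show ?thesis using Suc.IH by (simp add: supp_def)
  next
    assume "Some e = Some (u - ev i, u)"
    then show ?thesis using Suc.prems i unfolding cover_edges_def HS3_def
      by (auto simp: pred_pt_ev)
  qed
qed

definition nval :: "real \<Rightarrow> (point \<times> point \<Rightarrow> real) \<Rightarrow> (point \<times> point) option \<Rightarrow> real" where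
  "nval x0 w k = (case k of None \<Rightarrow> x0 | Some e \<Rightarrow> w e)"

lemma sum_delta_F: "finite F \<Longrightarrow> x \<in> F \<Longrightarrow> (\<Sum>k\<in>F. (if k = x then 1 else 0) * (f k :: real)) = f x"
  by (simp add: if_distrib[of "\<lambda>c. c * f _"] sum.delta cong: if_cong)

lemma bx_expand: "finite F \<Longrightarrow> supp n v \<subseteq> F \<Longrightarrow> bx (1/3) x0 w n v = (\<Sum>k\<in>F. coef n v k * nval x0 w k)"
proof (induction n arbitrary: v)
  case 0
  then have "None \<in> F" by (auto simp: supp_0)
  then show ?case using 0 by (simp add: if_distrib[of "\<lambda>c. c * _"] sum.delta nval_def cong: if_cong)
next
  case (Suc n)
  have sub: "supp n (v - ev i) \<subseteq> F" if "i < 3" for i using Suc.prems that unfolding supp_Suc by auto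
  have mem: "Some (v - ev i, v) \<in> F" if "i < 3" for i using Suc.prems that unfolding supp_Suc by auto
  have "(\<Sum>k\<in>F. coef (Suc n) v k * nval x0 w k)
      = (1/3) * (\<Sum>i<3. (\<Sum>k\<in>F. coef n (v - ev i) k * nval x0 w k) + (\<Sum>k\<in>F. (if k = Some (v - ev i, v) then 1 else 0) * nval x0 w k))"
  proof -
    have "(\<Sum>k\<in>F. coef (Suc n) v k * nval x0 w k) = (\<Sum>k\<in>F. (1/3) * (\<Sum>i<3. coef n (v - ev i) k * nval x0 w k + (if k = Some (v - ev i, v) then 1 else 0) * nval x0 w k))"
      by (simp add: sum_distrib_right distrib_right)
    also have "\<dots> = (1/3) * (\<Sum>i<3. \<Sum>k\<in>F. coef n (v - ev i) k * nval x0 w k + (if k = Some (v - ev i, v) then 1 else 0) * nval x0 w k)"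
      by (simp only: sum_distrib_left[symmetric] sum.swap[of _ F])
    also have "\<dots> = (1/3) * (\<Sum>i<3. (\<Sum>k\<in>F. coef n (v - ev i) k * nval x0 w k) + (\<Sum>k\<in>F. (if k = Some (v - ev i, v) then 1 else 0) * nval x0 w k))"
      by (simp only: sum.distrib)
    finally show ?thesis .
  qed
  also have "\<dots> = (1/3) * (\<Sum>i<3. bx (1/3) x0 w n (v - ev i) + w (v - ev i, v))"
    using Suc.IH[OF Suc.prems(1) sub] sum_delta_F[OF Suc.prems(1) mem] by (simp add: nval_def)
  also have "\<dots> = bx (1/3) x0 w (Suc n) v" by (simp add: pred_pt_ev)
  finally show ?case by simp
qed


definition CC :: "nat \<Rightarrow> point \<Rightarrow> point \<Rightarrow> real" where
  "CC n v v' = (\<Sum>k\<in>supp n v \<union> supp n v'. coef n v k * coef n v' k)"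

lemma CC_F: assumes "finite F" "supp n v \<subseteq> F"
  shows "(\<Sum>k\<in>F. coef n v k * coef n v' k) = CC n v v'"
proof -
  have "(\<Sum>k\<in>F. coef n v k * coef n v' k) = (\<Sum>k\<in>supp n v. coef n v k * coef n v' k)"
    by (rule sum.mono_neutral_right[OF assms(1) assms(2)]) (auto simp: supp_def)
  also have "\<dots> = (\<Sum>k\<in>supp n v \<union> supp n v'. coef n v k * coef n v' k)"
    by (rule sum.mono_neutral_left) (auto simp: supp_def finite_supp[unfolded supp_def])
  finally show ?thesis unfolding CC_def .
qed

lemma ev_inj: "i < 3 \<Longrightarrow> j < 3 \<Longrightarrow> ev i = ev j \<Longrightarrow> i = j"
  by (auto simp: ev_def dest!: less3 split: if_splits)

lemma CC_G: "rank v = rank v' \<Longrightarrow> CC n v v' = G n (v - v')"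
proof (induction n arbitrary: v v')
  case 0
  have "CC 0 v v' = 1" unfolding CC_def supp_0 by simp
  then show ?case by (simp add: G0)
next
  case (Suc n)
  let ?F = "supp (Suc n) v \<union> supp (Suc n) v'"
  have finF: "finite ?F" by simp
  let ?A = "\<lambda>i k. coef n (v - ev i) k" and ?B = "\<lambda>i k. (if k = Some (v - ev i, v) then 1 else 0 :: real)"
  let ?A' = "\<lambda>j k. coef n (v' - ev j) k" and ?B' = "\<lambda>j k. (if k = Some (v' - ev j, v') then 1 else 0 :: real)"
  have subA: "supp n (v - ev i) \<subseteq> ?F" if "i < 3" for i using that unfolding supp_Suc by auto
  have memB: "Some (v - ev i, v) \<in> ?F" if "i < 3" for i using that unfolding supp_Suc by auto
  have memB': "Some (v' - ev j, v') \<in> ?F" if "j < 3" for j using that unfolding supp_Suc by auto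
  have "CC (Suc n) v v' = (\<Sum>k\<in>?F. coef (Suc n) v k * coef (Suc n) v' k)"
    unfolding CC_def ..
  also have "\<dots> = (\<Sum>k\<in>?F. (1/9) * (\<Sum>i<3. \<Sum>j<3. (?A i k + ?B i k) * (?A' j k + ?B' j k)))"
    by (simp add: sum_product)
  also have "\<dots> = (1/9) * (\<Sum>i<3. \<Sum>j<3. (\<Sum>k\<in>?F. ?A i k * ?A' j k) + (\<Sum>k\<in>?F. ?A i k * ?B' j k) + (\<Sum>k\<in>?F. ?B i k * ?A' j k) + (\<Sum>k\<in>?F. ?B i k * ?B' j k))"
    by (simp add: sum_distrib_left sum.distrib distrib_left distrib_right sum.swap[of _ ?F])
  also have "\<dots> = (1/9) * (\<Sum>i<3. \<Sum>j<3. G n ((v - v') - ev i + ev j) + (if v = v' \<and> i = j then 1 else 0))"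
  proof -
    have "(\<Sum>k\<in>?F. ?A i k * ?A' j k) + (\<Sum>k\<in>?F. ?A i k * ?B' j k) + (\<Sum>k\<in>?F. ?B i k * ?A' j k) + (\<Sum>k\<in>?F. ?B i k * ?B' j k)
        = G n ((v - v') - ev i + ev j) + (if v = v' \<and> i = j then 1 else 0)" if ij: "i < 3" "j < 3" for i j
    proof -
      have r: "rank (v - ev i) = rank (v' - ev j)" using Suc.prems rank_minus_ev ij by simp
      have e1: "(\<Sum>k\<in>?F. ?A i k * ?A' j k) = G n ((v - v') - ev i + ev j)"
        using CC_F[OF finF subA[OF ij(1)]] Suc.IH[OF r] by (simp add: algebra_simps)
      have e2: "(\<Sum>k\<in>?F. ?A i k * ?B' j k) = 0"
      proof -
        have "(\<Sum>k\<in>?F. ?A i k * ?B' j k) = ?A i (Some (v' - ev j, v'))"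
          using sum_delta_F[OF finF memB'[OF ij(2)], of "?A i"] by (simp add: mult.commute)
        also have "\<dots> = 0"
        proof (rule ccontr)
          assume "?A i (Some (v' - ev j, v')) \<noteq> 0"
          then have "rank v' \<le> rank (v - ev i)" by (rule coef_rank)
          then show False using rank_minus_ev[OF ij(1)] Suc.prems by simp
        qed
        finally show ?thesis .
      qed
      have e3: "(\<Sum>k\<in>?F. ?B i k * ?A' j k) = 0"
      proof -
        have "(\<Sum>k\<in>?F. ?B i k * ?A' j k) = ?A' j (Some (v - ev i, v))"
          using sum_delta_F[OF finF memB[OF ij(1)], of "?A' j"] by simp
        also have "\<dots> = 0"
        proof (rule ccontr)
          assume "?A' j (Some (v - ev i, v)) \<noteq> 0"
          then have "rank v \<le> rank (v' - ev j)" by (rule coef_rank)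
          then show False using rank_minus_ev[OF ij(2)] Suc.prems by simp
        qed
        finally show ?thesis .
      qed
      have e4: "(\<Sum>k\<in>?F. ?B i k * ?B' j k) = (if v = v' \<and> i = j then 1 else 0)"
      proof -
        have "(\<Sum>k\<in>?F. ?B i k * ?B' j k) = ?B' j (Some (v - ev i, v))"
          using sum_delta_F[OF finF memB[OF ij(1)], of "?B' j"] by simp
        also have "\<dots> = (if v = v' \<and> i = j then 1 else 0)"
          using ev_inj[OF ij] by auto
        finally show ?thesis .
      qed
      show ?thesis using e1 e2 e3 e4 by simp
    qed
    then show ?thesis by simp
  qed
  also have "\<dots> = G (Suc n) (v - v')"
  proof -
    have "(\<Sum>i<(3::nat). \<Sum>j<(3::nat). (if v = v' \<and> i = j then 1 else 0 :: real)) = (if v = v' then 3 else 0)"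
      by (simp add: eval_nat_numeral)
    then show ?thesis unfolding G_rec by (simp add: sum.distrib)
  qed
  finally show ?case .
qed


definition Iset :: "(point \<times> point) option set" where "Iset = insert None (Some ` cover_edges)"

lemma noise_dist: assumes "gaussian_broadcast_model M X0 W" "k \<in> Iset"
  shows "distributed M lborel (noise_family X0 W k) std_normal_density"
  using assms unfolding gaussian_broadcast_model_def Iset_def noise_family_def by auto

lemma noise_single: assumes "gaussian_broadcast_model M X0 W" "k \<in> Iset"
  shows "integrable M (noise_family X0 W k)" "(\<integral>\<omega>. noise_family X0 W k \<omega> \<partial>M) = 0"
    "integrable M (\<lambda>\<omega>. noise_family X0 W k \<omega> * noise_family X0 W k \<omega>)"
    "(\<integral>\<omega>. noise_family X0 W k \<omega> * noise_family X0 W k \<omega> \<partial>M) = 1"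
proof -
  let ?X = "noise_family X0 W k"
  have P: "prob_space M" using assms(1) unfolding gaussian_broadcast_model_def by simp
  have D: "distributed M lborel ?X std_normal_density" by (rule noise_dist[OF assms])
  have nn: "\<And>x. 0 \<le> std_normal_density x" by (simp add: normal_density_nonneg)
  show i1: "integrable M ?X"
    using distributed_integrable[OF D, of "\<lambda>x. x"] integrable_std_normal_moment[of 1] nn by simp
  show e1: "(\<integral>\<omega>. ?X \<omega> \<partial>M) = 0"
    using prob_space.standard_normal_distributed_expectation[OF P D] by simp
  show "integrable M (\<lambda>\<omega>. ?X \<omega> * ?X \<omega>)"
    using distributed_integrable[OF D, of "\<lambda>x. x^2"] integrable_std_normal_moment[of 2] nn
    by (simp add: power2_eq_square)
  show "(\<integral>\<omega>. ?X \<omega> * ?X \<omega> \<partial>M) = 1"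
    using prob_space.standard_normal_distributed_variance[OF P D] e1 by (simp add: power2_eq_square)
qed

lemma noise_pair: assumes "gaussian_broadcast_model M X0 W" "k \<in> Iset" "l \<in> Iset" "k \<noteq> l"
  shows "integrable M (\<lambda>\<omega>. noise_family X0 W k \<omega> * noise_family X0 W l \<omega>)"
    "(\<integral>\<omega>. noise_family X0 W k \<omega> * noise_family X0 W l \<omega> \<partial>M) = 0"
proof -
  let ?N = "noise_family X0 W"
  have P: "prob_space M" using assms(1) unfolding gaussian_broadcast_model_def by simp
  have ind: "prob_space.indep_vars M (\<lambda>_. borel) ?N Iset"
    using assms(1) unfolding gaussian_broadcast_model_def Iset_def by simp
  have ind2: "prob_space.indep_vars M (\<lambda>_. borel) ?N (insert k {l})"
    by (rule prob_space.indep_vars_subset[OF P ind]) (use assms in auto)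
  have "prob_space.indep_var M borel (?N k) borel (\<lambda>\<omega>. \<Sum>i\<in>{l}. ?N i \<omega>)"
    by (rule prob_space.indep_vars_sum[OF P _ _ ind2]) (use assms in auto)
  then have iv: "prob_space.indep_var M borel (?N k) borel (?N l)" by simp
  show "integrable M (\<lambda>\<omega>. ?N k \<omega> * ?N l \<omega>)"
    by (rule prob_space.indep_var_integrable[OF P iv noise_single(1)[OF assms(1,2)] noise_single(1)[OF assms(1,3)]])
  show "(\<integral>\<omega>. ?N k \<omega> * ?N l \<omega> \<partial>M) = 0"
    using prob_space.indep_var_lebesgue_integral[OF P iv noise_single(1)[OF assms(1,2)] noise_single(1)[OF assms(1,3)]]
      noise_single(2)[OF assms(1,2)] by simp
qed

lemma noise_cross: assumes "gaussian_broadcast_model M X0 W" "k \<in> Iset" "l \<in> Iset"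
  shows "integrable M (\<lambda>\<omega>. noise_family X0 W k \<omega> * noise_family X0 W l \<omega>)"
    "(\<integral>\<omega>. noise_family X0 W k \<omega> * noise_family X0 W l \<omega> \<partial>M) = (if k = l then 1 else 0)"
  using noise_single[OF assms(1,2)] noise_pair[OF assms] by (cases "k = l"; simp)+

lemma lin_cov: assumes model: "gaussian_broadcast_model M X0 W" and F: "finite F" "F \<subseteq> Iset"
  shows "covariance M (\<lambda>\<omega>. \<Sum>k\<in>F. a k * noise_family X0 W k \<omega>) (\<lambda>\<omega>. \<Sum>k\<in>F. b k * noise_family X0 W k \<omega>) = (\<Sum>k\<in>F. a k * b k)"
    and "variance_of M (\<lambda>\<omega>. \<Sum>k\<in>F. a k * noise_family X0 W k \<omega>) = (\<Sum>k\<in>F. (a k)\<^sup>2)"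
proof -
  let ?N = "noise_family X0 W"
  have inI: "k \<in> F \<Longrightarrow> k \<in> Iset" for k using F by auto
  have mean0: "(\<integral>\<omega>. (\<Sum>k\<in>F. c k * ?N k \<omega>) \<partial>M) = 0" for c
    using noise_single(1,2)[OF model inI] by (simp add: Bochner_Integration.integral_sum)
  have prod: "(\<integral>\<omega>. (\<Sum>k\<in>F. c k * ?N k \<omega>) * (\<Sum>k\<in>F. d k * ?N k \<omega>) \<partial>M) = (\<Sum>k\<in>F. c k * d k)" for c d
  proof -
    have "(\<integral>\<omega>. (\<Sum>k\<in>F. c k * ?N k \<omega>) * (\<Sum>k\<in>F. d k * ?N k \<omega>) \<partial>M)
        = (\<integral>\<omega>. (\<Sum>k\<in>F. \<Sum>l\<in>F. (c k * d l) * (?N k \<omega> * ?N l \<omega>)) \<partial>M)"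
      by (simp add: sum_product mult_ac)
    also have "\<dots> = (\<Sum>k\<in>F. \<Sum>l\<in>F. (c k * d l) * (\<integral>\<omega>. ?N k \<omega> * ?N l \<omega> \<partial>M))"
      using noise_cross(1)[OF model inI inI]
      by (simp add: Bochner_Integration.integral_sum integrable_sum)
    also have "\<dots> = (\<Sum>k\<in>F. \<Sum>l\<in>F. (c k * d l) * (if k = l then 1 else 0))"
      using noise_cross(2)[OF model inI inI] by simp
    also have "\<dots> = (\<Sum>k\<in>F. c k * d k)"
      using F(1) by (simp add: if_distrib[of "\<lambda>x. _ * x"] sum.delta cong: if_cong)
    finally show ?thesis .
  qed
  show "covariance M (\<lambda>\<omega>. \<Sum>k\<in>F. a k * ?N k \<omega>) (\<lambda>\<omega>. \<Sum>k\<in>F. b k * ?N k \<omega>) = (\<Sum>k\<in>F. a k * b k)"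
    unfolding covariance_def mean0 using prod by simp
  show "variance_of M (\<lambda>\<omega>. \<Sum>k\<in>F. a k * ?N k \<omega>) = (\<Sum>k\<in>F. (a k)\<^sup>2)"
    unfolding variance_of_def mean0 using prod[of a a] by (simp add: power2_eq_square)
qed


lemma ln_step: assumes "1 \<le> n" shows "1 / (real n + 1) \<le> ln (real n + 1) - ln (real n)"
proof -
  have "ln (real n / (real n + 1)) \<le> real n / (real n + 1) - 1"
    by (rule ln_le_minus_one) (use assms in simp)
  moreover have "ln (real n / (real n + 1)) = ln (real n) - ln (real n + 1)"
    by (rule ln_divide_pos) (use assms in auto)
  moreover have "real n / (real n + 1) - 1 = - (1 / (real n + 1))"
    by (simp add: field_simps)
  ultimately show ?thesis by linarith
qed

lemma ln_step2: assumes "1 \<le> n" shows "ln (real n + 1) - ln (real n) \<le> 1 / real n"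
proof -
  have "ln ((real n + 1) / real n) \<le> (real n + 1) / real n - 1"
    by (rule ln_le_minus_one) (use assms in simp)
  moreover have "ln ((real n + 1) / real n) = ln (real n + 1) - ln (real n)"
    by (rule ln_divide_pos) (use assms in auto)
  moreover have "(real n + 1) / real n - 1 = 1 / real n"
    using assms by (simp add: field_simps)
  ultimately show ?thesis by linarith
qed

lemma harm_up: "(\<Sum>j<n. 1 / (real j + 1)) \<le> 1 + ln (real n)"
proof (induction n)
  case 0 then show ?case by simp
next
  case (Suc n)
  show ?case
  proof (cases "n = 0")
    case True then show ?thesis by simp
  next
    case False
    then have "1 / (real n + 1) \<le> ln (real n + 1) - ln (real n)" by (intro ln_step) simp
    then show ?thesis using Suc by (simp add: add.commute)
  qed
qed

lemma harm_low: assumes "1 \<le> a" "a \<le> b" shows "ln (real b) - ln (real a) \<le> (\<Sum>j\<in>{a..<b}. 1 / real j)"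
  using assms(2)
proof (induction rule: dec_induct)
  case base then show ?case by simp
next
  case (step n)
  have "1 \<le> n" using assms step by simp
  then have "ln (real n + 1) - ln (real n) \<le> 1 / real n" by (rule ln_step2)
  then show ?case using step by (simp add: add.commute)
qed

lemma ln2_ge: "1/2 \<le> ln (2::real)"
proof -
  have "ln (1/2::real) \<le> 1/2 - 1" by (rule ln_le_minus_one) simp
  moreover have "ln (1/2::real) = - ln 2" by (simp add: ln_div)
  ultimately show ?thesis by linarith
qed


lemma R0_dec: "R (Suc m) 0 \<le> R m 0"
  using two_le_sum[of m] R_le_R0[of m "(1,0,-1)"] R_le_R0[of m "(0,1,-1)"] by (smt (verit))

lemma G_upper: assumes "(2::real) ^ 24 \<le> real n" shows "G n 0 \<le> ln (real n)"
proof -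
  have "G n 0 = 1 + (1/3) * (\<Sum>j<n. R j 0)" by (simp add: G_def)
  also have "(\<Sum>j<n. R j 0) \<le> (\<Sum>j<n. 9 / 4 * (1 / (real j + 1)))"
    by (rule sum_mono) (use q_upper in simp)
  also have "\<dots> = 9 / 4 * (\<Sum>j<n. 1 / (real j + 1))" by (simp add: sum_distrib_left)
  also have "\<dots> \<le> 9 / 4 * (1 + ln (real n))" by (intro mult_left_mono harm_up) auto
  finally have g: "G n 0 \<le> 1 + 1 / 3 * (9 / 4 * (1 + ln (real n)))" by simp
  have "ln ((2::real) ^ 24) \<le> ln (real n)" using assms by (subst ln_le_cancel_iff) auto
  moreover have "ln ((2::real) ^ 24) = 24 * ln 2" by (simp only: ln_realpow)
  ultimately have "24 * ln (2::real) \<le> ln (real n)" by linarith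
  then have "12 \<le> ln (real n)" using ln2_ge by linarith
  moreover have "\<And>L::real. 12 \<le> L \<Longrightarrow> 1 + 1 / 3 * (9 / 4 * (1 + L)) \<le> L" by (simp add: field_simps)
  ultimately have "1 + 1 / 3 * (9 / 4 * (1 + ln (real n))) \<le> ln (real n)" by blast
  with g show ?thesis by (rule order.trans)
qed

lemma G_mono: "G n d \<le> G n 0"
  unfolding G_def by (simp add: sum_mono R_le_R0)

lemma G_lower:
  fixes Mi x y :: int
  assumes M1: "1 \<le> Mi" and hx: "\<bar>x\<bar> \<le> 2 * Mi" and hy: "\<bar>y\<bar> \<le> 2 * Mi" and hn: "2 ^ 24 * Mi ^ 6 \<le> int n"
  shows "ln (real n) / 400 \<le> G n (x, y, - x - y)"
proof -
  let ?M = "real_of_int Mi"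
  have M1r: "1 \<le> ?M" using M1 by simp
  have hnr: "2 ^ 24 * ?M ^ 6 \<le> real n"
  proof -
    have "real_of_int (2 ^ 24 * Mi ^ 6) \<le> real_of_int (int n)" using hn by (simp only: of_int_le_iff)
    then show ?thesis by simp
  qed
  define m0 where "m0 = nat (128 * Mi ^ 2)"
  have m0r: "real m0 = 128 * ?M ^ 2" unfolding m0_def using M1 by (simp add: of_nat_nat)
  have M2: "1 \<le> ?M ^ 2" using M1r by (simp add: one_le_power)
  have M6: "?M ^ 2 \<le> ?M ^ 6" using M1r by (intro power_increasing) auto
  have m01: "1 \<le> m0" using m0r M2 by linarith
  have m0n: "m0 \<le> n"
  proof -
    have "128 * ?M ^ 2 \<le> 2 ^ 24 * ?M ^ 6" using M6 by (intro mult_mono) auto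
    then have "real m0 \<le> real n" using m0r hnr by linarith
    then show ?thesis by simp
  qed
  have npos: "0 < real n" using m01 m0n by simp
  have x2: "real_of_int x ^ 2 \<le> 4 * ?M ^ 2"
  proof -
    have "\<bar>real_of_int x\<bar> \<le> 2 * ?M" using hx by linarith
    then have "\<bar>real_of_int x\<bar> ^ 2 \<le> (2 * ?M) ^ 2" by (intro power_mono) auto
    then show ?thesis by (simp add: power_mult_distrib)
  qed
  have y2: "real_of_int y ^ 2 \<le> 4 * ?M ^ 2"
  proof -
    have "\<bar>real_of_int y\<bar> \<le> 2 * ?M" using hy by linarith
    then have "\<bar>real_of_int y\<bar> ^ 2 \<le> (2 * ?M) ^ 2" by (intro power_mono) auto
    then show ?thesis by (simp add: power_mult_distrib)
  qed
  let ?K = "9 * (real_of_int x ^ 2 + real_of_int y ^ 2)"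
  have K: "?K \<le> 72 * ?M ^ 2" using x2 y2 by (simp only: distrib_left)
  let ?d = "(x, y, - x - y) :: point"
  have S1: "(\<Sum>j\<in>{m0..<n}. R j ?d) \<le> (\<Sum>j<n. R j ?d)"
    by (rule sum_mono2) (auto intro: R_nonneg)
  have tel: "(\<Sum>j\<in>{m0..<n}. R j 0 - R (Suc j) 0) = R m0 0 - R n 0"
    using sum_Suc_diff'[OF m0n, of "\<lambda>j. - R j 0"] by simp
  have T0: "0 \<le> R m0 0 - R n 0"
  proof -
    have "0 \<le> (\<Sum>j\<in>{m0..<n}. R j 0 - R (Suc j) 0)" by (rule sum_nonneg) (use R0_dec in simp)
    then show ?thesis using tel by simp
  qed
  have "(\<Sum>j\<in>{m0..<n}. R j 0 - ?K * (R j 0 - R (Suc j) 0)) \<le> (\<Sum>j\<in>{m0..<n}. R j ?d)"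
    by (rule sum_mono) (use gap_bound[of _ x y] in \<open>simp add: algebra_simps\<close>)
  moreover have "(\<Sum>j\<in>{m0..<n}. R j 0 - ?K * (R j 0 - R (Suc j) 0)) = (\<Sum>j\<in>{m0..<n}. R j 0) - ?K * (R m0 0 - R n 0)"
  proof -
    have "(\<Sum>j\<in>{m0..<n}. R j 0 - ?K * (R j 0 - R (Suc j) 0)) = (\<Sum>j\<in>{m0..<n}. R j 0) - ?K * (\<Sum>j\<in>{m0..<n}. R j 0 - R (Suc j) 0)"
      by (simp only: sum_subtractf[of "\<lambda>j. R j 0" "\<lambda>j. ?K * (R j 0 - R (Suc j) 0)"] sum_distrib_left)
    then show ?thesis by (simp only: tel)
  qed
  moreover have "?K * (R m0 0 - R n 0) \<le> 2"
  proof -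
    have "?K * (R m0 0 - R n 0) \<le> (72 * ?M ^ 2) * R m0 0"
      by (rule mult_mono[OF K]) (use T0 R_nonneg[of n 0] in auto)
    also have "\<dots> \<le> (72 * ?M ^ 2) * (9 / (4 * (real m0 + 1)))"
      by (intro mult_left_mono q_upper) auto
    also have "\<dots> \<le> 2"
    proof -
      have g: "0 < z \<Longrightarrow> (72 * z) * (9 / (4 * (128 * z + 1))) \<le> 2" for z :: real
        by (simp add: field_simps)
      show ?thesis unfolding m0r by (rule g) (use M1 in simp)
    qed
    finally show ?thesis .
  qed
  ultimately have S2: "(\<Sum>j\<in>{m0..<n}. R j 0) - 2 \<le> (\<Sum>j\<in>{m0..<n}. R j ?d)" by linarith
  have "(\<Sum>j\<in>{m0..<n}. 1 / 36 * (1 / real j)) \<le> (\<Sum>j\<in>{m0..<n}. R j 0)"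
  proof (rule sum_mono)
    fix j assume "j \<in> {m0..<n}"
    then have "1 \<le> j" using m01 by simp
    then show "1 / 36 * (1 / real j) \<le> R j 0" using q_lower[of j] by simp
  qed
  moreover have "(ln (real n) - ln (real m0)) / 36 \<le> (\<Sum>j\<in>{m0..<n}. 1 / 36 * (1 / real j))"
  proof -
    have "(\<Sum>j\<in>{m0..<n}. 1 / 36 * (1 / real j)) = 1 / 36 * (\<Sum>j\<in>{m0..<n}. 1 / real j)"
      by (simp only: sum_distrib_left)
    then show ?thesis using harm_low[OF m01 m0n] by simp
  qed
  ultimately have S3: "(ln (real n) - ln (real m0)) / 36 \<le> (\<Sum>j\<in>{m0..<n}. R j 0)" by linarith
  have S4: "3 * ln (real m0) \<le> ln (real n)"
  proof -
    have "real m0 ^ 3 = 2 ^ 21 * ?M ^ 6" unfolding m0r by (simp add: power_mult_distrib power_mult[symmetric])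
    also have "\<dots> \<le> 2 ^ 24 * ?M ^ 6" using M1r by simp
    also have "\<dots> \<le> real n" by (rule hnr)
    finally have "ln (real m0 ^ 3) \<le> ln (real n)" using m01 m0n by (subst ln_le_cancel_iff) auto
    then show ?thesis by (simp add: ln_realpow)
  qed
  have Lpos: "0 \<le> ln (real n)" using npos m0n m01 by simp
  have "G n ?d = 1 + (1/3) * (\<Sum>j<n. R j ?d)" by (simp add: G_def)
  moreover have "(ln (real n) - ln (real n) / 3) / 36 - 2 \<le> (\<Sum>j<n. R j ?d)"
    using S1 S2 S3 S4 by (simp add: divide_right_mono)
  moreover have "\<And>L S g::real. g = 1 + 1/3 * S \<Longrightarrow> (L - L/3)/36 - 2 \<le> S \<Longrightarrow> 0 \<le> L \<Longrightarrow> L/400 \<le> g"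
    by (simp add: field_simps)
  ultimately show ?thesis using Lpos by blast
qed


lemma bX_expand:
  assumes "finite F" "supp n u \<subseteq> F" "rank u = int n"
  shows "broadcastX (1/3) X0 W u = (\<lambda>\<omega>. \<Sum>k\<in>F. coef n u k * noise_family X0 W k \<omega>)"
proof
  fix \<omega>
  have "broadcastX (1/3) X0 W u \<omega> = bx (1/3) (X0 \<omega>) (\<lambda>e. W e \<omega>) n u"
    unfolding broadcastX_def using assms(3) by simp
  also have "\<dots> = (\<Sum>k\<in>F. coef n u k * nval (X0 \<omega>) (\<lambda>e. W e \<omega>) k)"
    by (rule bx_expand[OF assms(1,2)])
  also have "\<dots> = (\<Sum>k\<in>F. coef n u k * noise_family X0 W k \<omega>)"
    by (rule sum.cong) (auto simp: nval_def noise_family_def split: option.splits)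
  finally show "broadcastX (1/3) X0 W u \<omega> = (\<Sum>k\<in>F. coef n u k * noise_family X0 W k \<omega>)" .
qed

lemma supp_Iset: "rank u = int n \<Longrightarrow> supp n u \<subseteq> Iset"
proof
  fix k assume r: "rank u = int n" and k: "k \<in> supp n u"
  show "k \<in> Iset"
  proof (cases k)
    case None then show ?thesis by (simp add: Iset_def)
  next
    case (Some e)
    then have "coef n u (Some e) \<noteq> 0" using k by (simp add: supp_def)
    then have "e \<in> cover_edges" using coef_edge r by blast
    then show ?thesis using Some by (simp add: Iset_def)
  qed
qed

theorem lemmal:
  fixes M :: "'w measure" and X0 :: "'w \<Rightarrow> real" and W :: "point \<times> point \<Rightarrow> 'w \<Rightarrow> real"
    and Mi t i j i' j' :: int
  assumes model: "gaussian_broadcast_model M X0 W"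
    and hM: "Mi \<ge> 2 ^ 5"
    and ht: "t \<ge> 2 ^ 24 * Mi ^ 6"
    and hclose: "max \<bar>i - i'\<bar> \<bar>j - j'\<bar> \<le> 2 * Mi"
  shows "ln (real_of_int t) \<ge> variance_of M (broadcastX (1/3) X0 W (i, j, t - i - j))
     \<and> variance_of M (broadcastX (1/3) X0 W (i, j, t - i - j))
       \<ge> covariance M (broadcastX (1/3) X0 W (i, j, t - i - j))
                      (broadcastX (1/3) X0 W (i', j', t - i' - j'))
     \<and> covariance M (broadcastX (1/3) X0 W (i, j, t - i - j))
                    (broadcastX (1/3) X0 W (i', j', t - i' - j'))
       \<ge> ln (real_of_int t) / 400"
proof -
  let ?v = "(i, j, t - i - j) :: point" and ?v' = "(i', j', t - i' - j') :: point"
  have M1: "1 \<le> Mi" using hM by simp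
  have M6: "1 \<le> Mi ^ 6" using M1 by (simp add: one_le_power)
  have "(2::int) ^ 24 * 1 \<le> 2 ^ 24 * Mi ^ 6" using M6 by (intro mult_left_mono) auto
  then have t24: "2 ^ 24 \<le> t" using ht by linarith
  define n where "n = nat t"
  have tn: "t = int n" using t24 unfolding n_def by simp
  have rtn: "real_of_int t = real n" using tn by simp
  have rv: "rank ?v = int n" "rank ?v' = int n" using tn by (simp_all add: rank_def)
  define F where "F = supp n ?v \<union> supp n ?v'"
  have finF: "finite F" unfolding F_def by simp
  have FI: "F \<subseteq> Iset" unfolding F_def using supp_Iset[OF rv(1)] supp_Iset[OF rv(2)] by blast
  have ex1: "broadcastX (1/3) X0 W ?v = (\<lambda>\<omega>. \<Sum>k\<in>F. coef n ?v k * noise_family X0 W k \<omega>)"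
    by (rule bX_expand[OF finF _ rv(1)]) (simp add: F_def)
  have ex2: "broadcastX (1/3) X0 W ?v' = (\<lambda>\<omega>. \<Sum>k\<in>F. coef n ?v' k * noise_family X0 W k \<omega>)"
    by (rule bX_expand[OF finF _ rv(2)]) (simp add: F_def)
  have var: "variance_of M (broadcastX (1/3) X0 W ?v) = G n 0"
  proof -
    have "variance_of M (broadcastX (1/3) X0 W ?v) = (\<Sum>k\<in>F. (coef n ?v k)\<^sup>2)"
      unfolding ex1 by (rule lin_cov(2)[OF model finF FI])
    also have "\<dots> = (\<Sum>k\<in>F. coef n ?v k * coef n ?v k)" by (simp add: power2_eq_square)
    also have "\<dots> = CC n ?v ?v" by (rule CC_F[OF finF]) (simp add: F_def)
    also have "\<dots> = G n (?v - ?v)" by (rule CC_G) simp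
    finally show ?thesis by simp
  qed
  have cov: "covariance M (broadcastX (1/3) X0 W ?v) (broadcastX (1/3) X0 W ?v') = G n (?v - ?v')"
  proof -
    have "covariance M (broadcastX (1/3) X0 W ?v) (broadcastX (1/3) X0 W ?v') = (\<Sum>k\<in>F. coef n ?v k * coef n ?v' k)"
      unfolding ex1 ex2 by (rule lin_cov(1)[OF model finF FI])
    also have "\<dots> = CC n ?v ?v'" by (rule CC_F[OF finF]) (simp add: F_def)
    also have "\<dots> = G n (?v - ?v')" by (rule CC_G) (use rv in simp)
    finally show ?thesis .
  qed
  have d: "?v - ?v' = (i - i', j - j', - (i - i') - (j - j'))" by simp
  have hn24: "(2::real) ^ 24 \<le> real n"
  proof -
    have "real_of_int (2 ^ 24) \<le> real_of_int t" using t24 by (simp only: of_int_le_iff)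
    then show ?thesis using rtn by simp
  qed
  have A: "variance_of M (broadcastX (1/3) X0 W ?v) \<le> ln (real_of_int t)"
    unfolding var rtn by (rule G_upper[OF hn24])
  have B: "covariance M (broadcastX (1/3) X0 W ?v) (broadcastX (1/3) X0 W ?v') \<le> variance_of M (broadcastX (1/3) X0 W ?v)"
    unfolding var cov by (rule G_mono)
  have C: "ln (real_of_int t) / 400 \<le> covariance M (broadcastX (1/3) X0 W ?v) (broadcastX (1/3) X0 W ?v')"
    unfolding cov d rtn
    by (rule G_lower[OF M1]) (use hclose ht tn in auto)
  show ?thesis using A B C by simp
qed


end
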